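(* Let $\dot{\bm{A}},\dot{\bm{B}}\in\mathbb{Q}^{m\times n}$ with $m\ge n$, and let $\sigma_{\dot{\bm{A}},1}\ge\dots\ge\sigma_{\dot{\bm{A}},n}\ge0$ and $\sigma_{\dot{\bm{B}},1}\ge\dots\ge\sigma_{\dot{\bm{B}},n}\ge0$ be the singular values of $\dot{\bm{A}}$ and $\dot{\bm{B}}$ in descending order. Then $$\mathrm{Re}\big(\mathrm{Tr}(\dot{\bm{A}}^{*}\dot{\bm{B}})\big)\le \sum_{i=1}^n \sigma_{\dot{\bm{A}},i}\,\sigma_{\dot{\bm{B}},i}.$$ Equality holds if and only if there exist unitary $\dot{\bm{U}}\in\mathbb{Q}^{m\times m}$ and $\dot{\bm{V}}\in\mathbb{Q}^{n\times n}$ that simultaneously singular value decompose $\dot{\bm{A}}$ and $\dot{\bm{B}}$, i.e. $\dot{\bm{A}}=\dot{\bm{U}}\bm{\Sigma}_{\dot{\bm{A}}}\dot{\bm{V}}^*$ and $\dot{\bm{B}}=\dot{\bm{U}}\bm{\Sigma}_{\dot{\bm{B}}}\dot{\bm{V}}^*$, where $\bm{\Sigma}_{\dot{\bm{A}}}$, $\bm{\Sigma}_{\dot{\bm{B}}}$ are the $m\times n$ real matrices with diagonals $(\sigma_{\dot{\bm{A}},1},\dots,\sigma_{\dot{\bm{A}},n})$ and $(\sigma_{\dot{\bm{B}},1},\dots,\sigma_{\dot{\bm{B}},n})$ and zeros elsewhere.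
   Context: $\mathbb{Q}$ denotes the real quaternion algebra with basis $1,\bm{i},\bm{j},\bm{k}$ ($\bm{i}^2=\bm{j}^2=\bm{k}^2=\bm{ijk}=-1$). For a quaternion $a_0+a_1\bm{i}+a_2\bm{j}+a_3\bm{k}$, its real part is $a_0$; $\mathrm{Re}$ of a quaternion matrix trace is the real part of the trace (sum of diagonal entries). ${}^*$ denotes conjugate transpose; a square quaternion matrix $\dot{\bm{U}}$ is unitary if $\dot{\bm{U}}^*\dot{\bm{U}}=\dot{\bm{U}}\dot{\bm{U}}^*=I$. Singular values of a quaternion matrix are those given by its quaternion SVD $\dot{\bm{X}}=\dot{\bm{U}}\bm{\Sigma}\dot{\bm{V}}^*$ with $\dot{\bm{U}},\dot{\bm{V}}$ unitary and $\bm{\Sigma}$ real nonnegative diagonal. *)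

theory Defs
  imports "Jordan_Normal_Form.Matrix"
begin

text \<open>Real quaternions a0 + a1 i + a2 j + a3 k, with i^2 = j^2 = k^2 = ijk = -1.\<close>

datatype quat = Quat (qre: real) (qim_i: real) (qim_j: real) (qim_k: real)

instantiation quat :: ring_1
begin

definition "0 = Quat 0 0 0 0"
definition "1 = Quat 1 0 0 0"
definition "p + q = Quat (qre p + qre q) (qim_i p + qim_i q) (qim_j p + qim_j q) (qim_k p + qim_k q)"
definition "p - q = Quat (qre p - qre q) (qim_i p - qim_i q) (qim_j p - qim_j q) (qim_k p - qim_k q)"
definition "- p = Quat (- qre p) (- qim_i p) (- qim_j p) (- qim_k p)"
definition "p * q = Quat
   (qre p * qre q - qim_i p * qim_i q - qim_j p * qim_j q - qim_k p * qim_k q)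
   (qre p * qim_i q + qim_i p * qre q + qim_j p * qim_k q - qim_k p * qim_j q)
   (qre p * qim_j q - qim_i p * qim_k q + qim_j p * qre q + qim_k p * qim_i q)
   (qre p * qim_k q + qim_i p * qim_j q - qim_j p * qim_i q + qim_k p * qre q)"

instance
  by standard (simp_all add: zero_quat_def one_quat_def plus_quat_def minus_quat_def
      uminus_quat_def times_quat_def algebra_simps quat.expand)

end

definition qcnj :: "quat \<Rightarrow> quat" where
  "qcnj p = Quat (qre p) (- qim_i p) (- qim_j p) (- qim_k p)"

definition qreal :: "real \<Rightarrow> quat" where
  "qreal x = Quat x 0 0 0"

definition qadj :: "quat mat \<Rightarrow> quat mat" where
  "qadj M = transpose_mat (map_mat qcnj M)"

definition qtrace :: "quat mat \<Rightarrow> quat" where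
  "qtrace M = (\<Sum>i<dim_row M. M $$ (i, i))"

definition qunitary :: "nat \<Rightarrow> quat mat \<Rightarrow> bool" where
  "qunitary k U \<longleftrightarrow> U \<in> carrier_mat k k \<and> qadj U * U = 1\<^sub>m k \<and> U * qadj U = 1\<^sub>m k"

definition diag_rect :: "nat \<Rightarrow> nat \<Rightarrow> (nat \<Rightarrow> real) \<Rightarrow> quat mat" where
  "diag_rect m n s = mat m n (\<lambda>(i, j). if i = j then qreal (s i) else 0)"

definition singular_values :: "nat \<Rightarrow> nat \<Rightarrow> quat mat \<Rightarrow> (nat \<Rightarrow> real) \<Rightarrow> bool" where
  "singular_values m n A s \<longleftrightarrow>
     A \<in> carrier_mat m n \<and>
     (\<forall>i j. i \<le> j \<longrightarrow> j < n \<longrightarrow> s j \<le> s i) \<and> (\<forall>i<n. 0 \<le> s i) \<and>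
     (\<exists>U V. qunitary m U \<and> qunitary n V \<and> A = U * diag_rect m n s * qadj V)"

end

theory Submission
  imports Defs
begin

definition nsq :: "quat \<Rightarrow> real" where
  "nsq p = (qre p)^2 + (qim_i p)^2 + (qim_j p)^2 + (qim_k p)^2"

lemma quat_comps[simp]:
  "qre 0 = 0" "qim_i 0 = 0" "qim_j 0 = 0" "qim_k 0 = 0"
  "qre 1 = 1" "qim_i 1 = 0" "qim_j 1 = 0" "qim_k 1 = 0"
  "qre (p + q) = qre p + qre q" "qim_i (p + q) = qim_i p + qim_i q"
  "qim_j (p + q) = qim_j p + qim_j q" "qim_k (p + q) = qim_k p + qim_k q"
  "qre (p - q) = qre p - qre q" "qim_i (p - q) = qim_i p - qim_i q"
  "qim_j (p - q) = qim_j p - qim_j q" "qim_k (p - q) = qim_k p - qim_k q"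
  "qre (- p) = - qre p" "qim_i (- p) = - qim_i p" "qim_j (- p) = - qim_j p" "qim_k (- p) = - qim_k p"
  "qre (qcnj p) = qre p" "qim_i (qcnj p) = - qim_i p" "qim_j (qcnj p) = - qim_j p" "qim_k (qcnj p) = - qim_k p"
  "qre (qreal x) = x" "qim_i (qreal x) = 0" "qim_j (qreal x) = 0" "qim_k (qreal x) = 0"
  by (simp_all add: zero_quat_def one_quat_def plus_quat_def minus_quat_def uminus_quat_def qcnj_def qreal_def)

lemma quat_mult_comps:
  "qre (p * q) = qre p * qre q - qim_i p * qim_i q - qim_j p * qim_j q - qim_k p * qim_k q"
  "qim_i (p * q) = qre p * qim_i q + qim_i p * qre q + qim_j p * qim_k q - qim_k p * qim_j q"
  "qim_j (p * q) = qre p * qim_j q - qim_i p * qim_k q + qim_j p * qre q + qim_k p * qim_i q"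
  "qim_k (p * q) = qre p * qim_k q + qim_i p * qim_j q - qim_j p * qim_i q + qim_k p * qre q"
  by (simp_all add: times_quat_def)

lemma quat_eqI: "qre p = qre q \<Longrightarrow> qim_i p = qim_i q \<Longrightarrow> qim_j p = qim_j q \<Longrightarrow> qim_k p = qim_k q \<Longrightarrow> p = q"
  by (simp add: quat.expand)

lemma qcnj_mult: "qcnj (p * q) = qcnj q * qcnj p"
  by (rule quat_eqI) (simp_all add: algebra_simps quat_mult_comps)
lemma qcnj_add: "qcnj (p + q) = qcnj p + qcnj q"
  by (rule quat_eqI) simp_all
lemma qcnj_diff: "qcnj (p - q) = qcnj p - qcnj q"
  by (rule quat_eqI) simp_all
lemma qcnj_minus: "qcnj (- p) = - qcnj p"
  by (rule quat_eqI) simp_all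
lemma qcnj_0[simp]: "qcnj 0 = 0" by (rule quat_eqI) simp_all
lemma qcnj_1[simp]: "qcnj 1 = 1" by (rule quat_eqI) simp_all
lemma qcnj_qcnj[simp]: "qcnj (qcnj p) = p" by (rule quat_eqI) simp_all
lemma qcnj_qreal[simp]: "qcnj (qreal x) = qreal x" by (rule quat_eqI) simp_all
lemma qcnj_eq_0_iff[simp]: "qcnj p = 0 \<longleftrightarrow> p = 0"
  by (metis qcnj_0 qcnj_qcnj)
lemma qreal_comm: "qreal x * p = p * qreal x"
  by (rule quat_eqI) (simp_all add: quat_mult_comps)
lemma qreal_mult: "qreal x * qreal y = qreal (x * y)"
  by (rule quat_eqI) (simp_all add: quat_mult_comps)
lemma qreal_add: "qreal x + qreal y = qreal (x + y)"
  by (rule quat_eqI) simp_all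
lemma qreal_diff: "qreal x - qreal y = qreal (x - y)"
  by (rule quat_eqI) simp_all
lemma qreal_0[simp]: "qreal 0 = 0" by (rule quat_eqI) simp_all
lemma qreal_1[simp]: "qreal 1 = 1" by (rule quat_eqI) simp_all
lemma qreal_inj[simp]: "qreal x = qreal y \<longleftrightarrow> x = y"
  by (metis quat_comps(25))
lemma qreal_eq_0[simp]: "qreal x = 0 \<longleftrightarrow> x = 0"
  by (metis qreal_0 qreal_inj)
lemma qcnj_mult_self: "qcnj p * p = qreal (nsq p)"
  by (rule quat_eqI) (simp_all add: nsq_def algebra_simps power2_eq_square quat_mult_comps)
lemma mult_qcnj_self: "p * qcnj p = qreal (nsq p)"
  by (rule quat_eqI) (simp_all add: nsq_def algebra_simps power2_eq_square quat_mult_comps)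
lemma qre_mult_comm: "qre (p * q) = qre (q * p)"
  by (simp add: algebra_simps quat_mult_comps)
lemma nsq_nonneg[simp]: "0 \<le> nsq p" by (simp add: nsq_def)
lemma nsq_eq_0[simp]: "nsq p = 0 \<longleftrightarrow> p = 0"
proof
  assume "nsq p = 0"
  then have h: "(qre p)^2 + (qim_i p)^2 + (qim_j p)^2 + (qim_k p)^2 = 0" by (simp add: nsq_def)
  have "(qre p)^2 = 0" "(qim_i p)^2 = 0" "(qim_j p)^2 = 0" "(qim_k p)^2 = 0"
    using h zero_le_power2[of "qre p"] zero_le_power2[of "qim_i p"] zero_le_power2[of "qim_j p"]
      zero_le_power2[of "qim_k p"] by linarith+
  then have "qre p = 0 \<and> qim_i p = 0 \<and> qim_j p = 0 \<and> qim_k p = 0" by simp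
  then show "p = 0" by (intro quat_eqI) simp_all
qed (simp add: nsq_def)
lemma nsq_mult: "nsq (p * q) = nsq p * nsq q"
  by (simp add: nsq_def power2_eq_square algebra_simps quat_mult_comps)
lemma nsq_qcnj[simp]: "nsq (qcnj p) = nsq p" by (simp add: nsq_def)
lemma nsq_qreal[simp]: "nsq (qreal x) = x^2" by (simp add: nsq_def)
lemma nsq_1[simp]: "nsq 1 = 1" by (simp add: nsq_def)
lemma nsq_diff: "nsq (p - q) = nsq p + nsq q - 2 * qre (p * qcnj q)"
  by (simp add: nsq_def power2_eq_square algebra_simps quat_mult_comps)
lemma qre_cnj_le: "qre (p * qcnj q) \<le> (nsq p + nsq q) / 2"
proof -
  have "0 \<le> nsq (p - q)" by simp
  then show ?thesis unfolding nsq_diff by simp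
qed
lemma qre_cnj_sym: "qre (p * qcnj q) = qre (q * qcnj p)"
  by (simp add: algebra_simps quat_mult_comps)
lemma qre_qcnj[simp]: "qre (qcnj p) = qre p" by simp

lemma qre_sum: "qre (sum f A) = (\<Sum>x\<in>A. qre (f x))"
  by (induction A rule: infinite_finite_induct) simp_all
lemma qcnj_sum: "qcnj (sum f A) = (\<Sum>x\<in>A. qcnj (f x))"
  by (induction A rule: infinite_finite_induct) (simp_all add: qcnj_add)
lemma qreal_sum: "qreal (sum f A) = (\<Sum>x\<in>A. qreal (f x))"
  by (induction A rule: infinite_finite_induct) (simp_all add: qreal_add[symmetric])
lemma qre_real_mult[simp]: "qre (qreal x * p) = x * qre p" by (simp add: quat_mult_comps)
lemma qre_mult_real[simp]: "qre (p * qreal x) = qre p * x" by (simp add: quat_mult_comps)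

section \<open>Matrices\<close>

declare index_mult_mat(1)[simp del]

lemma qadj_dims[simp]: "dim_row (qadj A) = dim_col A" "dim_col (qadj A) = dim_row A"
  by (simp_all add: qadj_def)
lemma qadj_carrier[simp]: "A \<in> carrier_mat k l \<Longrightarrow> qadj A \<in> carrier_mat l k"
  unfolding carrier_mat_def by simp
lemma qadj_index[simp]: "i < dim_col A \<Longrightarrow> j < dim_row A \<Longrightarrow> qadj A $$ (i,j) = qcnj (A $$ (j,i))"
  by (simp add: qadj_def)

lemma mult_index:
  assumes "A \<in> carrier_mat k l" "B \<in> carrier_mat l p" "i < k" "j < p"
  shows "(A * B) $$ (i,j) = (\<Sum>t<l. A $$ (i,t) * B $$ (t,j))"
proof -
  have "(A * B) $$ (i,j) = row A i \<bullet> col B j" using assms by (simp add: index_mult_mat)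
  also have "\<dots> = (\<Sum>t\<in>{0..<l}. row A i $ t * col B j $ t)" using assms by (simp add: scalar_prod_def)
  also have "\<dots> = (\<Sum>t<l. A $$ (i,t) * B $$ (t,j))" using assms
    by (simp only: atLeast0LessThan) (rule sum.cong, auto)
  finally show ?thesis .
qed

lemma qadj_mult:
  assumes A: "A \<in> carrier_mat k l" and B: "B \<in> carrier_mat l p"
  shows "qadj (A * B) = qadj B * qadj A"
proof (rule eq_matI)
  fix i j assume "i < dim_row (qadj B * qadj A)" "j < dim_col (qadj B * qadj A)"
  then have i: "i < p" and j: "j < k" using A B by auto
  have "qadj (A * B) $$ (i,j) = qcnj ((A*B) $$ (j,i))" using A B i j by simp
  also have "\<dots> = (\<Sum>t<l. qcnj (B $$ (t,i)) * qcnj (A $$ (j,t)))"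
    using A B i j by (simp add: mult_index[OF A B] qcnj_sum qcnj_mult)
  also have "\<dots> = (qadj B * qadj A) $$ (i,j)"
    using A B i j by (subst mult_index[of _ p l _ k]) auto
  finally show "qadj (A * B) $$ (i, j) = (qadj B * qadj A) $$ (i, j)" .
qed (use A B in auto)

lemma qadj_qadj[simp]: "qadj (qadj A) = A"
  by (rule eq_matI) auto

lemma qadj_one[simp]: "qadj (1\<^sub>m k) = 1\<^sub>m k"
  by (rule eq_matI) auto

lemma qunitary_adj: "qunitary k U \<Longrightarrow> qunitary k (qadj U)"
  unfolding qunitary_def by auto

lemma qunitary_one: "qunitary k (1\<^sub>m k)"
  unfolding qunitary_def by auto

lemma qunitary_carrier: "qunitary k U \<Longrightarrow> U \<in> carrier_mat k k"
  unfolding qunitary_def by auto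

lemma qunitary_mult:
  assumes U: "qunitary k U" and V: "qunitary k V"
  shows "qunitary k (U * V)"
proof -
  have Uc: "U \<in> carrier_mat k k" and Vc: "V \<in> carrier_mat k k"
    using U V by (auto simp: qunitary_def)
  have aU: "qadj U \<in> carrier_mat k k" and aV: "qadj V \<in> carrier_mat k k" using Uc Vc by auto
  have "qadj (U * V) * (U * V) = (qadj V * qadj U) * (U * V)"
    by (simp only: qadj_mult[OF Uc Vc])
  also have "\<dots> = qadj V * ((qadj U * U) * V)"
    using Uc Vc aU aV by (simp add: assoc_mult_mat[of _ k k _ k _ k])
  also have "\<dots> = 1\<^sub>m k" using U V Vc by (simp add: qunitary_def)
  finally have 1: "qadj (U * V) * (U * V) = 1\<^sub>m k" .
  have "(U * V) * qadj (U * V) = (U * V) * (qadj V * qadj U)"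
    by (simp only: qadj_mult[OF Uc Vc])
  also have "\<dots> = U * ((V * qadj V) * qadj U)"
    using assoc_mult_mat[OF Uc Vc mult_carrier_mat[OF aV aU]] assoc_mult_mat[OF Vc aV aU] by simp
  also have "\<dots> = 1\<^sub>m k" using U V Uc by (simp add: qunitary_def)
  finally have 2: "(U * V) * qadj (U * V) = 1\<^sub>m k" .
  show ?thesis unfolding qunitary_def using 1 2 Uc Vc by simp
qed

lemma qtrace_re_comm:
  assumes A: "A \<in> carrier_mat k l" and B: "B \<in> carrier_mat l k"
  shows "qre (qtrace (A * B)) = qre (qtrace (B * A))"
proof -
  have "qre (qtrace (A * B)) = (\<Sum>i<k. \<Sum>t<l. qre (A $$ (i,t) * B $$ (t,i)))"
    unfolding qtrace_def using A B by (simp add: mult_index[OF A B] qre_sum)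
  also have "\<dots> = (\<Sum>t<l. \<Sum>i<k. qre (B $$ (t,i) * A $$ (i,t)))"
    by (subst sum.swap) (simp add: qre_mult_comm)
  also have "\<dots> = qre (qtrace (B * A))"
    unfolding qtrace_def using A B by (simp add: mult_index[OF B A] qre_sum)
  finally show ?thesis .
qed

lemma unitary_orth:
  assumes "qunitary k U" "i < k" "j < k"
  shows "(\<Sum>t<k. qcnj (U $$ (t,i)) * U $$ (t,j)) = (if i = j then 1 else 0)"
proof -
  have Uc: "U \<in> carrier_mat k k" using assms by (simp add: qunitary_def)
  have "(qadj U * U) $$ (i,j) = (\<Sum>t<k. qcnj (U $$ (t,i)) * U $$ (t,j))"
    using assms Uc by (subst mult_index[of _ k k _ k]) auto
  then show ?thesis using assms by (simp add: qunitary_def)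
qed

lemma unitary_orth2:
  assumes "qunitary k U" "i < k" "j < k"
  shows "(\<Sum>t<k. U $$ (i,t) * qcnj (U $$ (j,t))) = (if i = j then 1 else 0)"
proof -
  have Uc: "U \<in> carrier_mat k k" using assms by (simp add: qunitary_def)
  have "(U * qadj U) $$ (i,j) = (\<Sum>t<k. U $$ (i,t) * qcnj (U $$ (j,t)))"
    using assms Uc by (subst mult_index[of _ k k _ k]) auto
  then show ?thesis using assms by (simp add: qunitary_def)
qed

lemma unitary_col_norm:
  assumes "qunitary k U" "j < k"
  shows "(\<Sum>t<k. nsq (U $$ (t,j))) = 1"
proof -
  have "qre (\<Sum>t<k. qcnj (U $$ (t,j)) * U $$ (t,j)) = 1"
    using unitary_orth[OF assms(1,2,2)] by simp
  then show ?thesis by (simp add: qre_sum qcnj_mult_self)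
qed

lemma unitary_row_norm:
  assumes "qunitary k U" "i < k"
  shows "(\<Sum>t<k. nsq (U $$ (i,t))) = 1"
proof -
  have "qre (\<Sum>t<k. U $$ (i,t) * qcnj (U $$ (i,t))) = 1"
    using unitary_orth2[OF assms(1,2,2)] by simp
  then show ?thesis by (simp add: qre_sum mult_qcnj_self)
qed

lemma diag_rect_carrier[simp]: "diag_rect m n s \<in> carrier_mat m n"
  by (simp add: diag_rect_def)
lemma diag_rect_dims[simp]: "dim_row (diag_rect m n s) = m" "dim_col (diag_rect m n s) = n"
  by (simp_all add: diag_rect_def)
lemma diag_rect_index[simp]: "i < m \<Longrightarrow> j < n \<Longrightarrow> diag_rect m n s $$ (i,j) = (if i = j then qreal (s i) else 0)"
  by (simp add: diag_rect_def)
lemma qadj_diag_rect[simp]: "qadj (diag_rect m n s) = diag_rect n m s"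
  by (rule eq_matI) auto

lemma svd_entry:
  assumes U: "U \<in> carrier_mat m m" and V: "V \<in> carrier_mat n n" and nm: "n \<le> m"
    and i: "i < m" and j: "j < n"
  shows "(U * diag_rect m n s * qadj V) $$ (i,j) = (\<Sum>k<n. U $$ (i,k) * qreal (s k) * qcnj (V $$ (j,k)))"
proof -
  have UD: "U * diag_rect m n s \<in> carrier_mat m n" using U by simp
  have e: "(U * diag_rect m n s) $$ (i,k) = U $$ (i,k) * qreal (s k)" if k: "k < n" for k
  proof -
    have "(U * diag_rect m n s) $$ (i,k) = (\<Sum>t<m. U $$ (i,t) * (if t = k then qreal (s t) else 0))"
      using U i k nm by (subst mult_index[OF U diag_rect_carrier]) auto
    also have "\<dots> = (\<Sum>t<m. if t = k then U $$ (i,t) * qreal (s t) else 0)"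
      by (rule sum.cong) auto
    also have "\<dots> = U $$ (i,k) * qreal (s k)" using k nm by (simp add: sum.delta')
    finally show ?thesis .
  qed
  have "(U * diag_rect m n s * qadj V) $$ (i,j) = (\<Sum>k<n. (U * diag_rect m n s) $$ (i,k) * qadj V $$ (k,j))"
    using i j by (rule mult_index[OF UD qadj_carrier[OF V]])
  also have "\<dots> = (\<Sum>k<n. U $$ (i,k) * qreal (s k) * qcnj (V $$ (j,k)))"
    using j V by (intro sum.cong) (auto simp: e)
  finally show ?thesis .
qed

lemma qre_mid_real: "qre (p * qreal x * q) = x * qre (p * q)"
proof -
  have "p * qreal x * q = qreal x * (p * q)" by (simp add: qreal_comm mult.assoc[symmetric])
  then show ?thesis by simp
qed

lemma trace_diag_left:
  assumes X: "X \<in> carrier_mat m n" and nm: "n \<le> m"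
  shows "qre (qtrace (diag_rect n m a * X)) = (\<Sum>i<n. a i * qre (X $$ (i,i)))"
proof -
  have "(diag_rect n m a * X) $$ (i,i) = qreal (a i) * X $$ (i,i)" if i: "i < n" for i
  proof -
    have "(diag_rect n m a * X) $$ (i,i) = (\<Sum>t<m. diag_rect n m a $$ (i,t) * X $$ (t,i))"
      using i nm by (intro mult_index[OF diag_rect_carrier X]) auto
    also have "\<dots> = (\<Sum>t<m. if t = i then qreal (a i) * X $$ (t,i) else 0)"
      using i by (intro sum.cong) auto
    also have "\<dots> = qreal (a i) * X $$ (i,i)" using i nm by (simp add: sum.delta')
    finally show ?thesis .
  qed
  moreover have "dim_row (diag_rect n m a * X) = n" by (simp add: index_mult_mat)
  ultimately show ?thesis unfolding qtrace_def by (simp add: qre_sum)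
qed

lemma trace_formula:
  assumes nm: "n \<le> m"
    and U1: "U1 \<in> carrier_mat m m" and U2: "U2 \<in> carrier_mat m m"
    and V1: "V1 \<in> carrier_mat n n" and V2: "V2 \<in> carrier_mat n n"
  shows "qre (qtrace (qadj (U1 * diag_rect m n a * qadj V1) * (U2 * diag_rect m n b * qadj V2))) =
    (\<Sum>i<n. a i * (\<Sum>j<n. b j * qre ((qadj U1 * U2) $$ (i,j) * qcnj ((qadj V1 * V2) $$ (i,j)))))"
proof -
  let ?DA = "diag_rect m n a" and ?DA' = "diag_rect n m a" and ?DB = "diag_rect m n b"
  define W where "W = qadj U1 * U2"
  define Z where "Z = qadj V1 * V2"
  have Wc: "W \<in> carrier_mat m m" unfolding W_def by (rule mult_carrier_mat[OF qadj_carrier[OF U1] U2])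
  have Zc: "Z \<in> carrier_mat n n" unfolding Z_def by (rule mult_carrier_mat[OF qadj_carrier[OF V1] V2])
  have aU1: "qadj U1 \<in> carrier_mat m m" and aV1: "qadj V1 \<in> carrier_mat n n"
    and aV2: "qadj V2 \<in> carrier_mat n n" using U1 V1 V2 by auto
  have U1D: "U1 * ?DA \<in> carrier_mat m n" by (rule mult_carrier_mat[OF U1 diag_rect_carrier])
  have U2D: "U2 * ?DB \<in> carrier_mat m n" by (rule mult_carrier_mat[OF U2 diag_rect_carrier])
  have qZ: "qadj Z = qadj V2 * V1" unfolding Z_def using qadj_mult[OF aV1 V2] by simp
  have adjA: "qadj (U1 * ?DA * qadj V1) = V1 * (?DA' * qadj U1)"
    using qadj_mult[OF U1D aV1] qadj_mult[OF U1 diag_rect_carrier] by simp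
  define P where "P = ?DA' * qadj U1"
  define Q where "Q = U2 * ?DB * qadj V2"
  have Pc: "P \<in> carrier_mat n m" unfolding P_def by (rule mult_carrier_mat[OF diag_rect_carrier aU1])
  have Qc: "Q \<in> carrier_mat m n" unfolding Q_def by (rule mult_carrier_mat[OF U2D aV2])
  have "qadj (U1 * ?DA * qadj V1) * (U2 * ?DB * qadj V2) = V1 * (P * Q)"
    unfolding adjA P_def[symmetric] Q_def[symmetric] using V1 Pc Qc by simp
  then have "qre (qtrace (qadj (U1 * ?DA * qadj V1) * (U2 * ?DB * qadj V2))) = qre (qtrace ((P * Q) * V1))"
    using qtrace_re_comm[OF V1, of "P * Q"] Pc Qc by simp
  also have "(P * Q) * V1 = ?DA' * (W * ?DB * qadj Z)"
  proof -
    have "(P * Q) * V1 = P * (Q * V1)" using Pc Qc V1 by simp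
    also have "Q * V1 = (U2 * ?DB) * (qadj V2 * V1)" unfolding Q_def using U2D aV2 V1 by simp
    also have "P * ((U2 * ?DB) * (qadj V2 * V1)) = ?DA' * (qadj U1 * ((U2 * ?DB) * (qadj V2 * V1)))"
      unfolding P_def by (rule assoc_mult_mat[OF diag_rect_carrier aU1 mult_carrier_mat[OF U2D mult_carrier_mat[OF aV2 V1]]])
    also have "qadj U1 * ((U2 * ?DB) * (qadj V2 * V1)) = (qadj U1 * (U2 * ?DB)) * (qadj V2 * V1)"
      by (rule assoc_mult_mat[OF aU1 U2D mult_carrier_mat[OF aV2 V1], symmetric])
    also have "qadj U1 * (U2 * ?DB) = W * ?DB" unfolding W_def
      by (rule assoc_mult_mat[OF aU1 U2 diag_rect_carrier, symmetric])
    finally show ?thesis unfolding qZ .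
  qed
  also have "qre (qtrace (?DA' * (W * ?DB * qadj Z))) = (\<Sum>i<n. a i * qre ((W * ?DB * qadj Z) $$ (i,i)))"
    using nm by (intro trace_diag_left mult_carrier_mat[OF mult_carrier_mat[OF Wc diag_rect_carrier] qadj_carrier[OF Zc]])
  also have "\<dots> = (\<Sum>i<n. a i * (\<Sum>j<n. b j * qre (W $$ (i,j) * qcnj (Z $$ (i,j)))))"
    using nm by (intro sum.cong refl) (simp add: svd_entry[OF Wc Zc nm] qre_sum qre_mid_real)
  finally show ?thesis unfolding W_def Z_def .
qed

lemma rearr:
  fixes b D :: "nat \<Rightarrow> real"
  assumes desc: "\<forall>i j. i \<le> j \<longrightarrow> j < n \<longrightarrow> b j \<le> b i" and nonneg: "\<forall>i<n. 0 \<le> b i"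
    and D01: "\<forall>j<n. 0 \<le> D j \<and> D j \<le> 1" and D0: "\<forall>j<r. D j = 0"
    and Dsum: "(\<Sum>j<n. D j) \<le> real (Suc k - r)" and rk: "r \<le> k" and kn: "k < n"
  shows "(\<Sum>j<n. b j * D j) \<le> (\<Sum>j\<in>{r..k}. b j)"
proof -
  have hterm: "b j * D j - (if j \<in> {r..k} then b j else 0) \<le> b k * (D j - (if j \<in> {r..k} then 1 else 0))"
    if j: "j < n" for j
  proof (cases "j < r")
    case True then show ?thesis using D0 by auto
  next
    case False
    show ?thesis
    proof (cases "j \<le> k")
      case True
      then have "b k \<le> b j" using desc kn by auto
      moreover have "D j - 1 \<le> 0" using D01 j by auto
      ultimately have "b j * (D j - 1) \<le> b k * (D j - 1)" by (simp add: mult_right_mono_neg)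
      then show ?thesis using True False by (auto simp: algebra_simps)
    next
      case False
      then have "b j \<le> b k" using desc j by auto
      then have "b j * D j \<le> b k * D j" using D01 j by (simp add: mult_right_mono)
      then show ?thesis using False by auto
    qed
  qed
  have s1: "(\<Sum>j<n. (if j \<in> {r..k} then b j else 0)) = (\<Sum>j\<in>{r..k}. b j)"
  proof -
    have "(\<Sum>j<n. (if j \<in> {r..k} then b j else 0)) = sum b ({..<n} \<inter> {r..k})"
      by (rule sum.inter_restrict[OF finite_lessThan, symmetric])
    also have "{..<n} \<inter> {r..k} = {r..k}" using kn by auto
    finally show ?thesis .
  qed
  have s2: "(\<Sum>j<n. (if j \<in> {r..k} then 1 else 0::real)) = real (Suc k - r)"
  proof -
    have "(\<Sum>j<n. (if j \<in> {r..k} then 1 else 0::real)) = (\<Sum>j\<in>{..<n} \<inter> {r..k}. 1)"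
      by (rule sum.inter_restrict[OF finite_lessThan, symmetric])
    also have "{..<n} \<inter> {r..k} = {r..k}" using kn by auto
    finally show ?thesis by simp
  qed
  have "(\<Sum>j<n. b j * D j) - (\<Sum>j\<in>{r..k}. b j) = (\<Sum>j<n. b j * D j - (if j \<in> {r..k} then b j else 0))"
    by (simp only: sum_subtractf s1)
  also have "\<dots> \<le> (\<Sum>j<n. b k * (D j - (if j \<in> {r..k} then 1 else 0)))"
    by (rule sum_mono) (use hterm in auto)
  also have "\<dots> = b k * ((\<Sum>j<n. D j) - real (Suc k - r))"
    by (simp only: sum_distrib_left[symmetric] sum_subtractf s2)
  also have "\<dots> \<le> 0" using Dsum nonneg kn by (simp add: mult_nonneg_nonpos)
  finally show ?thesis by simp
qed

lemma abel_identity0: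
  fixes a y :: "nat \<Rightarrow> real"
  shows "(\<Sum>i\<in>{r..<Suc r + t}. a i * y i) =
    (\<Sum>j\<in>{r..<r + t}. (a j - a (Suc j)) * (\<Sum>i\<in>{r..j}. y i)) + a (r + t) * (\<Sum>i\<in>{r..r + t}. y i)"
proof (induction t)
  case 0
  then show ?case by simp
next
  case (Suc t)
  have "(\<Sum>i\<in>{r..<Suc r + Suc t}. a i * y i) = (\<Sum>i\<in>{r..<Suc r + t}. a i * y i) + a (Suc (r + t)) * y (Suc (r + t))"
    by simp
  also have "\<dots> = (\<Sum>j\<in>{r..<r + t}. (a j - a (Suc j)) * (\<Sum>i\<in>{r..j}. y i)) + a (r + t) * (\<Sum>i\<in>{r..r + t}. y i)
      + a (Suc (r + t)) * y (Suc (r + t))"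
    using Suc by simp
  also have "\<dots> = (\<Sum>j\<in>{r..<r + Suc t}. (a j - a (Suc j)) * (\<Sum>i\<in>{r..j}. y i)) + a (r + Suc t) * (\<Sum>i\<in>{r..r + Suc t}. y i)"
    by (simp add: algebra_simps)
  finally show ?case .
qed

lemma abel_identity:
  fixes a y :: "nat \<Rightarrow> real"
  assumes "r < N"
  shows "(\<Sum>i\<in>{r..<N}. a i * y i) =
    (\<Sum>j\<in>{r..<N-1}. (a j - a (Suc j)) * (\<Sum>i\<in>{r..j}. y i)) + a (N-1) * (\<Sum>i\<in>{r..N-1}. y i)"
proof -
  obtain t where N: "N = Suc r + t" using assms less_iff_Suc_add by auto
  have "N - 1 = r + t" using N by simp
  then show ?thesis unfolding N using abel_identity0[of a y r t] by simp
qed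

lemma abel_bound:
  fixes a y :: "nat \<Rightarrow> real"
  assumes desc: "\<forall>i j. i \<le> j \<longrightarrow> j < n \<longrightarrow> a j \<le> a i" and nonneg: "\<forall>i<n. 0 \<le> a i"
    and S: "\<forall>k. r \<le> k \<longrightarrow> k < n \<longrightarrow> 0 \<le> (\<Sum>i\<in>{r..k}. y i)"
    and rk: "r \<le> k" and kn: "k < n"
  shows "(a k - (if Suc k < n then a (Suc k) else 0)) * (\<Sum>i\<in>{r..k}. y i) \<le> (\<Sum>i\<in>{r..<n}. a i * y i)"
    and "0 \<le> (\<Sum>i\<in>{r..<n}. a i * y i)"
proof -
  have rn: "r < n" using rk kn by simp
  let ?T = "\<lambda>j. (a j - a (Suc j)) * (\<Sum>i\<in>{r..j}. y i)"
  have Tnn: "\<forall>j\<in>{r..<n-1}. 0 \<le> ?T j" using desc S by (auto intro!: mult_nonneg_nonneg)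
  have last: "0 \<le> a (n-1) * (\<Sum>i\<in>{r..n-1}. y i)" using nonneg S rn by auto
  have id: "(\<Sum>i\<in>{r..<n}. a i * y i) = sum ?T {r..<n-1} + a (n-1) * (\<Sum>i\<in>{r..n-1}. y i)"
    by (rule abel_identity[OF rn])
  show "0 \<le> (\<Sum>i\<in>{r..<n}. a i * y i)" unfolding id using Tnn last
    by (intro add_nonneg_nonneg sum_nonneg) auto
  show "(a k - (if Suc k < n then a (Suc k) else 0)) * (\<Sum>i\<in>{r..k}. y i) \<le> (\<Sum>i\<in>{r..<n}. a i * y i)"
  proof (cases "Suc k < n")
    case True
    then have "k \<in> {r..<n-1}" using rk by auto
    then have "?T k \<le> sum ?T {r..<n-1}" using Tnn by (intro member_le_sum) auto
    then show ?thesis unfolding id using True last by simp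
  next
    case False
    then have "k = n - 1" using kn by simp
    moreover have "0 \<le> sum ?T {r..<n-1}" by (rule sum_nonneg) (use Tnn in blast)
    ultimately show ?thesis unfolding id using False by simp
  qed
qed

lemma nsq_0[simp]: "nsq 0 = 0" by (simp add: nsq_def)

definition desc_nn :: "nat \<Rightarrow> (nat \<Rightarrow> real) \<Rightarrow> bool" where
  "desc_nn n b \<longleftrightarrow> (\<forall>i j. i \<le> j \<longrightarrow> j < n \<longrightarrow> b j \<le> b i) \<and> (\<forall>i<n. 0 \<le> b i)"

definition xx :: "nat \<Rightarrow> quat mat \<Rightarrow> quat mat \<Rightarrow> (nat \<Rightarrow> real) \<Rightarrow> nat \<Rightarrow> real" where
  "xx n W Z b i = (\<Sum>j<n. b j * qre (W $$ (i,j) * qcnj (Z $$ (i,j))))"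

definition dd :: "quat mat \<Rightarrow> quat mat \<Rightarrow> nat \<Rightarrow> nat \<Rightarrow> real" where
  "dd W Z i j = (nsq (W $$ (i,j)) + nsq (Z $$ (i,j))) / 2"

lemma dd_nonneg: "0 \<le> dd W Z i j" by (simp add: dd_def)

lemma xx_le_dd:
  assumes "\<forall>j<n. 0 \<le> b j"
  shows "xx n W Z b i \<le> (\<Sum>j<n. b j * dd W Z i j)"
  unfolding xx_def dd_def using assms by (intro sum_mono mult_left_mono qre_cnj_le) auto

lemma row_sum_dd:
  assumes W: "qunitary m W" and Z: "qunitary n Z" and nm: "n \<le> m" and i: "i < n"
  shows "(\<Sum>j<n. dd W Z i j) \<le> 1"
proof -
  have "(\<Sum>j<n. nsq (W $$ (i,j))) \<le> (\<Sum>j<m. nsq (W $$ (i,j)))"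
    using nm by (intro sum_mono2) auto
  also have "\<dots> = 1" using unitary_row_norm[OF W] i nm by simp
  finally have 1: "(\<Sum>j<n. nsq (W $$ (i,j))) \<le> 1" .
  have 2: "(\<Sum>j<n. nsq (Z $$ (i,j))) = 1" using unitary_row_norm[OF Z i] .
  show ?thesis using 1 2 unfolding dd_def by (simp add: sum_divide_distrib[symmetric] sum.distrib)
qed

lemma col_sum_dd:
  assumes W: "qunitary m W" and Z: "qunitary n Z" and nm: "n \<le> m" and j: "j < n" and kn: "k < n"
  shows "(\<Sum>i\<in>{r..k}. dd W Z i j) \<le> 1"
proof -
  have "(\<Sum>i\<in>{r..k}. nsq (W $$ (i,j))) \<le> (\<Sum>i<m. nsq (W $$ (i,j)))"
    using nm kn by (intro sum_mono2) auto
  also have "\<dots> = 1" using unitary_col_norm[OF W] j nm by simp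
  finally have 1: "(\<Sum>i\<in>{r..k}. nsq (W $$ (i,j))) \<le> 1" .
  have "(\<Sum>i\<in>{r..k}. nsq (Z $$ (i,j))) \<le> (\<Sum>i<n. nsq (Z $$ (i,j)))"
    using kn by (intro sum_mono2) auto
  also have "\<dots> = 1" using unitary_col_norm[OF Z j] .
  finally have 2: "(\<Sum>i\<in>{r..k}. nsq (Z $$ (i,j))) \<le> 1" .
  show ?thesis using 1 2 unfolding dd_def by (simp add: sum_divide_distrib[symmetric] sum.distrib)
qed

lemma kyfan:
  assumes W: "qunitary m W" and Z: "qunitary n Z" and nm: "n \<le> m" and b: "desc_nn n b"
    and rk: "r \<le> k" and kn: "k < n"
    and W0: "\<forall>i j. r \<le> i \<longrightarrow> i < n \<longrightarrow> j < r \<longrightarrow> W $$ (i,j) = 0 \<and> Z $$ (i,j) = 0"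
  shows "(\<Sum>i\<in>{r..k}. xx n W Z b i) \<le> (\<Sum>i\<in>{r..k}. b i)"
proof -
  define D where "D j = (\<Sum>i\<in>{r..k}. dd W Z i j)" for j
  have bnn: "\<forall>j<n. 0 \<le> b j" using b by (simp add: desc_nn_def)
  have "(\<Sum>i\<in>{r..k}. xx n W Z b i) \<le> (\<Sum>i\<in>{r..k}. \<Sum>j<n. b j * dd W Z i j)"
    by (intro sum_mono xx_le_dd bnn)
  also have "\<dots> = (\<Sum>j<n. b j * D j)"
    unfolding D_def by (subst sum.swap) (simp add: sum_distrib_left)
  also have "\<dots> \<le> (\<Sum>i\<in>{r..k}. b i)"
  proof (rule rearr)
    show "\<forall>i j. i \<le> j \<longrightarrow> j < n \<longrightarrow> b j \<le> b i" "\<forall>i<n. 0 \<le> b i" using b by (auto simp: desc_nn_def)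
    show "\<forall>j<n. 0 \<le> D j \<and> D j \<le> 1"
      unfolding D_def using col_sum_dd[OF W Z nm _ kn] by (auto intro: sum_nonneg dd_nonneg)
    show "\<forall>j<r. D j = 0"
      unfolding D_def dd_def using W0 kn by (auto intro!: sum.neutral)
    have "(\<Sum>j<n. D j) = (\<Sum>i\<in>{r..k}. \<Sum>j<n. dd W Z i j)" unfolding D_def by (rule sum.swap)
    also have "\<dots> \<le> (\<Sum>i\<in>{r..k}. 1)" using kn by (intro sum_mono row_sum_dd[OF W Z nm]) auto
    also have "\<dots> = real (Suc k - r)" by simp
    finally show "(\<Sum>j<n. D j) \<le> real (Suc k - r)" .
  qed (use rk kn in auto)
  finally show ?thesis .
qed

lemma xx_bound:
  assumes W: "qunitary m W" and Z: "qunitary n Z" and nm: "n \<le> m" and b: "desc_nn n b"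
    and ri: "r \<le> i" and i: "i < n"
    and W0: "\<forall>j<r. W $$ (i,j) = 0 \<and> Z $$ (i,j) = 0"
  shows "xx n W Z b i \<le> b r"
proof -
  have bnn: "\<forall>j<n. 0 \<le> b j" using b by (simp add: desc_nn_def)
  have "xx n W Z b i \<le> (\<Sum>j<n. b j * dd W Z i j)" by (rule xx_le_dd[OF bnn])
  also have "\<dots> \<le> (\<Sum>j<n. b r * dd W Z i j)"
  proof (rule sum_mono)
    fix j assume j: "j \<in> {..<n}"
    show "b j * dd W Z i j \<le> b r * dd W Z i j"
    proof (cases "j < r")
      case True then show ?thesis using W0 by (simp add: dd_def)
    next
      case False then have "b j \<le> b r" using b j by (auto simp: desc_nn_def)
      then show ?thesis by (intro mult_right_mono dd_nonneg)
    qed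
  qed
  also have "\<dots> = b r * (\<Sum>j<n. dd W Z i j)" by (simp add: sum_distrib_left)
  also have "\<dots> \<le> b r * 1"
    using row_sum_dd[OF W Z nm i] b ri i by (intro mult_left_mono) (auto simp: desc_nn_def)
  finally show ?thesis by simp
qed

lemma qre_cnj_eq: "qre (p * qcnj q) = (nsq p + nsq q - nsq (p - q)) / 2"
  by (simp add: nsq_diff)

lemma row_analysis:
  assumes W: "qunitary m W" and Z: "qunitary n Z" and nm: "n \<le> m" and b: "desc_nn n b"
    and rn: "r < n" and br: "0 < b r"
    and W0: "\<forall>j<r. W $$ (r,j) = 0 \<and> Z $$ (r,j) = 0"
    and eq: "xx n W Z b r = b r"
  shows "\<forall>j<n. W $$ (r,j) = Z $$ (r,j) \<and> (Z $$ (r,j) = 0 \<or> b j = b r)"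
    and "\<forall>j. n \<le> j \<longrightarrow> j < m \<longrightarrow> W $$ (r,j) = 0"
proof -
  define d where "d j = dd W Z r j" for j
  define e where "e j = nsq (W $$ (r,j) - Z $$ (r,j)) / 2" for j
  have bnn: "\<forall>j<n. 0 \<le> b j" using b by (simp add: desc_nn_def)
  have xe: "xx n W Z b r = (\<Sum>j<n. b j * (d j - e j))"
    unfolding xx_def d_def e_def dd_def by (intro sum.cong refl) (simp add: qre_cnj_eq diff_divide_distrib)
  define P1 where "P1 = b r * (1 - (\<Sum>j<n. d j))"
  define P2 where "P2 = (\<Sum>j<n. (b r - b j) * d j)"
  define P3 where "P3 = (\<Sum>j<n. b j * e j)"
  have split: "b r - xx n W Z b r = P1 + P2 + P3"
    unfolding xe P1_def P2_def P3_def
    by (simp add: algebra_simps sum_subtractf sum_distrib_left sum.distrib)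
  have d1: "(\<Sum>j<n. d j) \<le> 1" unfolding d_def by (rule row_sum_dd[OF W Z nm rn])
  have P1nn: "0 \<le> P1" unfolding P1_def using br d1 by simp
  have P2t: "0 \<le> (b r - b j) * d j" if "j < n" for j
  proof (cases "j < r")
    case True then show ?thesis using W0 by (simp add: d_def dd_def)
  next
    case False then have "b j \<le> b r" using b that by (auto simp: desc_nn_def)
    then show ?thesis unfolding d_def by (intro mult_nonneg_nonneg dd_nonneg) simp
  qed
  have P2nn: "0 \<le> P2" unfolding P2_def using P2t by (intro sum_nonneg) auto
  have P3t: "0 \<le> b j * e j" if "j < n" for j using bnn that by (simp add: e_def)
  have P3nn: "0 \<le> P3" unfolding P3_def using P3t by (intro sum_nonneg) auto
  have "P1 + P2 + P3 = 0" using split eq by simp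
  then have z1: "P1 = 0" and z2: "P2 = 0" and z3: "P3 = 0" using P1nn P2nn P3nn by linarith+
  have t2: "\<forall>j<n. (b r - b j) * d j = 0"
    using z2 P2t unfolding P2_def by (subst (asm) sum_nonneg_eq_0_iff) auto
  have t3: "\<forall>j<n. b j * e j = 0"
    using z3 P3t unfolding P3_def by (subst (asm) sum_nonneg_eq_0_iff) auto
  have s1: "(\<Sum>j<n. d j) = 1" using z1 br unfolding P1_def by simp
  have Zr: "(\<Sum>j<n. nsq (Z $$ (r,j))) = 1" using unitary_row_norm[OF Z rn] .
  have "(\<Sum>j<n. d j) = ((\<Sum>j<n. nsq (W $$ (r,j))) + (\<Sum>j<n. nsq (Z $$ (r,j)))) / 2"
    unfolding d_def dd_def by (simp add: sum_divide_distrib[symmetric] sum.distrib)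
  then have Wn: "(\<Sum>j<n. nsq (W $$ (r,j))) = 1" using s1 Zr by simp
  have Wm: "(\<Sum>j<m. nsq (W $$ (r,j))) = 1" using unitary_row_norm[OF W] rn nm by simp
  have "(\<Sum>j<m. nsq (W $$ (r,j))) = (\<Sum>j<n. nsq (W $$ (r,j))) + (\<Sum>j\<in>{n..<m}. nsq (W $$ (r,j)))"
  proof -
    have "{..<m} = {..<n} \<union> {n..<m}" using nm by auto
    then show ?thesis by (metis finite_lessThan finite_atLeastLessThan sum.union_disjoint ivl_disj_int_one(2))
  qed
  then have "(\<Sum>j\<in>{n..<m}. nsq (W $$ (r,j))) = 0" using Wn Wm by simp
  then have "\<forall>j\<in>{n..<m}. nsq (W $$ (r,j)) = 0" by (subst (asm) sum_nonneg_eq_0_iff) auto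
  then show "\<forall>j. n \<le> j \<longrightarrow> j < m \<longrightarrow> W $$ (r,j) = 0" by auto
  show "\<forall>j<n. W $$ (r,j) = Z $$ (r,j) \<and> (Z $$ (r,j) = 0 \<or> b j = b r)"
  proof (intro allI impI)
    fix j assume j: "j < n"
    show "W $$ (r,j) = Z $$ (r,j) \<and> (Z $$ (r,j) = 0 \<or> b j = b r)"
    proof (cases "b j = b r")
      case True
      then have "e j = 0" using t3 j br by auto
      then show ?thesis using True by (simp add: e_def)
    next
      case False
      then have "d j = 0" using t2 j by auto
      then have "nsq (W $$ (r,j)) + nsq (Z $$ (r,j)) = 0" by (simp add: d_def dd_def)
      then have "nsq (W $$ (r,j)) = 0" "nsq (Z $$ (r,j)) = 0"
        using nsq_nonneg[of "W $$ (r,j)"] nsq_nonneg[of "Z $$ (r,j)"] by linarith+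
      then show ?thesis by simp
    qed
  qed
qed

lemma delta_sum_left:
  assumes "i < (N::nat)"
  shows "(\<Sum>t<N. (if i = t then 1 else 0) * (X t :: quat)) = X i"
proof -
  have "(\<Sum>t<N. (if i = t then 1 else 0) * X t) = (\<Sum>t<N. if t = i then X t else 0)"
    by (rule sum.cong) auto
  also have "\<dots> = X i" by (subst sum.delta) (use assms in auto)
  finally show ?thesis .
qed

lemma delta_sum_right:
  assumes "j < (N::nat)"
  shows "(\<Sum>t<N. (X t :: quat) * (if t = j then 1 else 0)) = X j"
proof -
  have "(\<Sum>t<N. X t * (if t = j then 1 else 0)) = (\<Sum>t<N. if t = j then X t else 0)"
    by (rule sum.cong) auto
  also have "\<dots> = X j" by (subst sum.delta) (use assms in auto)
  finally show ?thesis .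
qed

lemma rank1_sum:
  fixes w :: "nat \<Rightarrow> quat"
  assumes i: "i < (N::nat)" and j: "j < N"
  shows "(\<Sum>t<N. ((if i = t then 1 else 0) - w i * qreal c * qcnj (w t)) *
                 ((if t = j then 1 else 0) - w t * qreal c * qcnj (w j))) =
         (if i = j then 1 else 0) - w i * qreal (2 * c - c * c * (\<Sum>t<N. nsq (w t))) * qcnj (w j)"
proof -
  let ?d1 = "\<lambda>t. (if i = t then 1 else 0) :: quat" and ?d2 = "\<lambda>t. (if t = j then 1 else 0) :: quat"
  let ?b = "\<lambda>t. w i * qreal c * qcnj (w t)" and ?e = "\<lambda>t. w t * qreal c * qcnj (w j)"
  have exp: "(?d1 t - ?b t) * (?d2 t - ?e t) = ?d1 t * ?d2 t - ?d1 t * ?e t - ?b t * ?d2 t + ?b t * ?e t" for t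
    by (simp add: algebra_simps)
  have T1: "(\<Sum>t<N. ?d1 t * ?d2 t) = (if i = j then 1 else 0)" using delta_sum_left[OF i, of ?d2] by simp
  have T2: "(\<Sum>t<N. ?d1 t * ?e t) = w i * qreal c * qcnj (w j)" using delta_sum_left[OF i, of ?e] by simp
  have T3: "(\<Sum>t<N. ?b t * ?d2 t) = w i * qreal c * qcnj (w j)" using delta_sum_right[OF j, of ?b] by simp
  have T4: "(\<Sum>t<N. ?b t * ?e t) = w i * qreal (c * c * (\<Sum>t<N. nsq (w t))) * qcnj (w j)"
  proof -
    have "?b t * ?e t = (w i * qreal c) * ((qcnj (w t) * w t) * (qreal c * qcnj (w j)))" for t
      by (simp add: mult.assoc)
    then have "(\<Sum>t<N. ?b t * ?e t) = (w i * qreal c) * ((\<Sum>t<N. qcnj (w t) * w t) * (qreal c * qcnj (w j)))"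
      by (simp add: sum_distrib_left sum_distrib_right)
    also have "(\<Sum>t<N. qcnj (w t) * w t) = qreal (\<Sum>t<N. nsq (w t))"
      by (simp add: qcnj_mult_self qreal_sum)
    also have "(w i * qreal c) * (qreal (\<Sum>t<N. nsq (w t)) * (qreal c * qcnj (w j))) =
        w i * (qreal c * qreal (\<Sum>t<N. nsq (w t)) * qreal c) * qcnj (w j)"
      by (simp add: mult.assoc)
    also have "qreal c * qreal (\<Sum>t<N. nsq (w t)) * qreal c = qreal (c * c * (\<Sum>t<N. nsq (w t)))"
      by (simp add: qreal_mult algebra_simps)
    finally show ?thesis by (simp add: mult.assoc)
  qed
  have "(\<Sum>t<N. (?d1 t - ?b t) * (?d2 t - ?e t)) =
      (\<Sum>t<N. ?d1 t * ?d2 t) - (\<Sum>t<N. ?d1 t * ?e t) - (\<Sum>t<N. ?b t * ?d2 t) + (\<Sum>t<N. ?b t * ?e t)"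
    unfolding exp by (simp add: sum.distrib sum_subtractf)
  also have "\<dots> = (if i = j then 1 else 0) - w i * (qreal c + qreal c - qreal (c * c * (\<Sum>t<N. nsq (w t)))) * qcnj (w j)"
    unfolding T1 T2 T3 T4 by (simp add: algebra_simps)
  also have "qreal c + qreal c - qreal (c * c * (\<Sum>t<N. nsq (w t))) = qreal (2 * c - c * c * (\<Sum>t<N. nsq (w t)))"
    by (simp add: qreal_add qreal_diff)
  finally show ?thesis .
qed

definition hth :: "(nat \<Rightarrow> quat) \<Rightarrow> nat \<Rightarrow> quat" where
  "hth v r = (if v r = 0 then 1 else qcnj (v r) * qreal (1 / sqrt (nsq (v r))))"
definition hw :: "(nat \<Rightarrow> quat) \<Rightarrow> nat \<Rightarrow> nat \<Rightarrow> quat" where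
  "hw v r k = (if k = r then 1 else 0) - v k * hth v r"
definition hcoef :: "nat \<Rightarrow> (nat \<Rightarrow> quat) \<Rightarrow> nat \<Rightarrow> real" where
  "hcoef N v r = 2 / (\<Sum>k<N. nsq (hw v r k))"
definition hH :: "nat \<Rightarrow> (nat \<Rightarrow> quat) \<Rightarrow> nat \<Rightarrow> quat mat" where
  "hH N v r = mat N N (\<lambda>(i,j). (if i = j then 1 else 0) - hw v r i * qreal (hcoef N v r) * qcnj (hw v r j))"
definition hdg :: "(nat \<Rightarrow> quat) \<Rightarrow> nat \<Rightarrow> nat \<Rightarrow> quat" where
  "hdg v r j = (if j = r then qcnj (hth v r) else 1)"
definition hD :: "nat \<Rightarrow> (nat \<Rightarrow> quat) \<Rightarrow> nat \<Rightarrow> quat mat" where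
  "hD N v r = mat N N (\<lambda>(i,j). if i = j then hdg v r i else 0)"
definition hR :: "nat \<Rightarrow> (nat \<Rightarrow> quat) \<Rightarrow> nat \<Rightarrow> quat mat" where
  "hR N v r = hH N v r * hD N v r"

lemma hH_dims[simp]: "dim_row (hH N v r) = N" "dim_col (hH N v r) = N" by (simp_all add: hH_def)
lemma hD_dims[simp]: "dim_row (hD N v r) = N" "dim_col (hD N v r) = N" by (simp_all add: hD_def)
lemma hH_carrier[simp]: "hH N v r \<in> carrier_mat N N" by (simp add: hH_def)
lemma hD_carrier[simp]: "hD N v r \<in> carrier_mat N N" by (simp add: hD_def)
lemma hR_carrier[simp]: "hR N v r \<in> carrier_mat N N"
  unfolding hR_def by (rule mult_carrier_mat[OF hH_carrier hD_carrier])

lemma nsq_hth: "nsq (hth v r) = 1"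
proof (cases "v r = 0")
  case False
  have pos: "0 < nsq (v r)" using False nsq_nonneg[of "v r"] nsq_eq_0[of "v r"] by linarith
  have "nsq (hth v r) = nsq (v r) * (1 / sqrt (nsq (v r)))^2"
    using False by (simp add: hth_def nsq_mult)
  also have "\<dots> = 1" using pos False by (simp add: power_divide)
  finally show ?thesis .
qed (simp add: hth_def)

lemma hth_cnj: "hth v r * qcnj (hth v r) = 1"
  by (simp add: mult_qcnj_self nsq_hth)

lemma v_hth: "v r * hth v r = qreal (sqrt (nsq (v r)))"
proof (cases "v r = 0")
  case False
  have pos: "0 < nsq (v r)" using False nsq_nonneg[of "v r"] nsq_eq_0[of "v r"] by linarith
  have "v r * hth v r = (v r * qcnj (v r)) * qreal (1 / sqrt (nsq (v r)))"
    using False by (simp add: hth_def mult.assoc)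
  also have "\<dots> = qreal (nsq (v r) / sqrt (nsq (v r)))" by (simp add: mult_qcnj_self qreal_mult)
  also have "nsq (v r) / sqrt (nsq (v r)) = sqrt (nsq (v r))" using pos by (simp add: real_div_sqrt)
  finally show ?thesis .
qed (simp add: hth_def)

lemma hH_index: "i < N \<Longrightarrow> j < N \<Longrightarrow>
  hH N v r $$ (i,j) = (if i = j then 1 else 0) - hw v r i * qreal (hcoef N v r) * qcnj (hw v r j)"
  by (simp add: hH_def)

lemma hD_index: "i < N \<Longrightarrow> j < N \<Longrightarrow> hD N v r $$ (i,j) = (if i = j then hdg v r i else 0)"
  by (simp add: hD_def)

lemma qadj_hH: "qadj (hH N v r) = hH N v r"
  by (rule eq_matI) (auto simp: hH_index qcnj_diff qcnj_mult mult.assoc)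

lemma hH_sq: "hH N v r * hH N v r = 1\<^sub>m N"
proof (rule eq_matI)
  fix i j assume "i < dim_row (1\<^sub>m N)" "j < dim_col (1\<^sub>m N)"
  then have i: "i < N" and j: "j < N" by auto
  let ?c = "hcoef N v r" and ?S = "\<Sum>t<N. nsq (hw v r t)"
  have cz: "2 * ?c - ?c * ?c * ?S = 0"
  proof (cases "?S = 0")
    case True then show ?thesis by (simp add: hcoef_def)
  next
    case False then show ?thesis by (simp add: hcoef_def)
  qed
  have "(hH N v r * hH N v r) $$ (i,j) = (\<Sum>t<N. hH N v r $$ (i,t) * hH N v r $$ (t,j))"
    using i j by (rule mult_index[OF hH_carrier hH_carrier])
  also have "\<dots> = (\<Sum>t<N. ((if i = t then 1 else 0) - hw v r i * qreal ?c * qcnj (hw v r t)) *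
                 ((if t = j then 1 else 0) - hw v r t * qreal ?c * qcnj (hw v r j)))"
    using i j by (intro sum.cong refl) (simp add: hH_index)
  also have "\<dots> = (if i = j then 1 else 0)"
    using rank1_sum[OF i j, of "hw v r" ?c] cz by simp
  finally show "(hH N v r * hH N v r) $$ (i,j) = 1\<^sub>m N $$ (i,j)" using i j by simp
qed (simp_all add: index_mult_mat)

lemma qunitary_hH: "qunitary N (hH N v r)"
  unfolding qunitary_def by (simp add: qadj_hH hH_sq)

lemma diag_sum_right:
  assumes "j < (N::nat)"
  shows "(\<Sum>t<N. (X t :: quat) * (if t = j then d else 0)) = X j * d"
proof -
  have "(\<Sum>t<N. X t * (if t = j then d else 0)) = (\<Sum>t<N. if t = j then X t * d else 0)"
    by (rule sum.cong) auto
  also have "\<dots> = X j * d" by (subst sum.delta) (use assms in auto)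
  finally show ?thesis .
qed

lemma diag_sum_left:
  assumes "i < (N::nat)"
  shows "(\<Sum>t<N. (if i = t then d else 0) * (X t :: quat)) = d * X i"
proof -
  have "(\<Sum>t<N. (if i = t then d else 0) * X t) = (\<Sum>t<N. if t = i then d * X t else 0)"
    by (rule sum.cong) auto
  also have "\<dots> = d * X i" by (subst sum.delta) (use assms in auto)
  finally show ?thesis .
qed

lemma qunitary_hD: "qunitary N (hD N v r)"
proof -
  have nd: "qcnj (hdg v r i) * hdg v r i = 1" for i
    by (simp add: hdg_def qcnj_mult_self nsq_hth)
  have nd2: "hdg v r i * qcnj (hdg v r i) = 1" for i
    by (simp add: hdg_def mult_qcnj_self nsq_hth)
  have 1: "qadj (hD N v r) * hD N v r = 1\<^sub>m N"
  proof (rule eq_matI)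
    fix i j assume "i < dim_row (1\<^sub>m N)" "j < dim_col (1\<^sub>m N)"
    then have i: "i < N" and j: "j < N" by auto
    have "(qadj (hD N v r) * hD N v r) $$ (i,j) = (\<Sum>t<N. qadj (hD N v r) $$ (i,t) * hD N v r $$ (t,j))"
      using i j by (rule mult_index[OF qadj_carrier[OF hD_carrier] hD_carrier])
    also have "\<dots> = (\<Sum>t<N. (if i = t then qcnj (hdg v r i) else 0) * (if t = j then hdg v r t else 0))"
      using i j by (intro sum.cong refl) (auto simp: hD_index)
    also have "\<dots> = qcnj (hdg v r i) * (if i = j then hdg v r i else 0)"
      using diag_sum_left[OF i] by simp
    also have "\<dots> = 1\<^sub>m N $$ (i,j)" using i j nd by simp
    finally show "(qadj (hD N v r) * hD N v r) $$ (i,j) = 1\<^sub>m N $$ (i,j)" .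
  qed (simp_all add: index_mult_mat)
  have 2: "hD N v r * qadj (hD N v r) = 1\<^sub>m N"
  proof (rule eq_matI)
    fix i j assume "i < dim_row (1\<^sub>m N)" "j < dim_col (1\<^sub>m N)"
    then have i: "i < N" and j: "j < N" by auto
    have "(hD N v r * qadj (hD N v r)) $$ (i,j) = (\<Sum>t<N. hD N v r $$ (i,t) * qadj (hD N v r) $$ (t,j))"
      using i j by (rule mult_index[OF hD_carrier qadj_carrier[OF hD_carrier]])
    also have "\<dots> = (\<Sum>t<N. (if i = t then hdg v r i else 0) * (if t = j then qcnj (hdg v r t) else 0))"
      using i j by (intro sum.cong refl) (auto simp: hD_index)
    also have "\<dots> = hdg v r i * (if i = j then qcnj (hdg v r i) else 0)"
      using diag_sum_left[OF i] by simp
    also have "\<dots> = 1\<^sub>m N $$ (i,j)" using i j nd2 by simp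
    finally show "(hD N v r * qadj (hD N v r)) $$ (i,j) = 1\<^sub>m N $$ (i,j)" .
  qed (simp_all add: index_mult_mat)
  show ?thesis unfolding qunitary_def using 1 2 by simp
qed

lemma qunitary_hR: "qunitary N (hR N v r)"
  unfolding hR_def by (rule qunitary_mult[OF qunitary_hH qunitary_hD])

lemma hR_index:
  assumes i: "i < N" and j: "j < N"
  shows "hR N v r $$ (i,j) = hH N v r $$ (i,j) * hdg v r j"
proof -
  have "hR N v r $$ (i,j) = (\<Sum>t<N. hH N v r $$ (i,t) * hD N v r $$ (t,j))"
    unfolding hR_def using i j by (rule mult_index[OF hH_carrier hD_carrier])
  also have "\<dots> = (\<Sum>t<N. hH N v r $$ (i,t) * (if t = j then hdg v r j else 0))"
    using j by (intro sum.cong refl) (auto simp: hD_index)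
  also have "\<dots> = hH N v r $$ (i,j) * hdg v r j" by (rule diag_sum_right[OF j])
  finally show ?thesis .
qed

lemma hR_dims[simp]: "dim_row (hR N v r) = N" "dim_col (hR N v r) = N"
  by (simp_all add: hR_def index_mult_mat)

lemma nsq_uminus[simp]: "nsq (- p) = nsq p" by (simp add: nsq_def)

lemma hw_sum:
  assumes r: "r < N" and vn: "(\<Sum>k<N. nsq (v k)) = 1"
  shows "(\<Sum>k<N. nsq (hw v r k)) = 2 - 2 * sqrt (nsq (v r))"
proof -
  let ?s = "sqrt (nsq (v r))"
  have e: "nsq (hw v r k) = (if k = r then 1 - 2 * ?s else 0) + nsq (v k)" for k
  proof (cases "k = r")
    case True
    have "hw v r k = qreal (1 - ?s)" using True by (simp add: hw_def v_hth qreal_diff[symmetric])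
    then have "nsq (hw v r k) = (1 - ?s)^2" by simp
    also have "\<dots> = 1 - 2 * ?s + ?s^2" by (simp add: power2_eq_square algebra_simps)
    also have "?s^2 = nsq (v r)" by simp
    finally show ?thesis using True by simp
  next
    case False
    then have "hw v r k = - (v k * hth v r)" by (simp add: hw_def)
    then show ?thesis using False by (simp add: nsq_mult nsq_hth)
  qed
  have "(\<Sum>k<N. nsq (hw v r k)) = (\<Sum>k<N. (if k = r then 1 - 2 * ?s else 0)) + (\<Sum>k<N. nsq (v k))"
    by (simp only: e sum.distrib)
  also have "(\<Sum>k<N. (if k = r then 1 - 2 * ?s else 0)) = 1 - 2 * ?s"
    by (subst sum.delta) (use r in auto)
  finally show ?thesis using vn by simp
qed

lemma hR_col_r:
  assumes r: "r < N" and vn: "(\<Sum>k<N. nsq (v k)) = 1" and i: "i < N"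
  shows "hR N v r $$ (i,r) = v i"
proof -
  let ?s = "sqrt (nsq (v r))" and ?c = "hcoef N v r"
  have wr: "hw v r r = qreal (1 - ?s)" by (simp add: hw_def v_hth qreal_diff[symmetric])
  have S: "(\<Sum>k<N. nsq (hw v r k)) = 2 - 2 * ?s" by (rule hw_sum[OF r vn])
  have H: "hH N v r $$ (i,r) = (if i = r then 1 else 0) - hw v r i * qreal (?c * (1 - ?s))"
    using i r by (simp add: hH_index wr mult.assoc qreal_mult)
  have H2: "hH N v r $$ (i,r) = v i * hth v r"
  proof (cases "?s = 1")
    case True
    then have S0: "(\<Sum>k<N. nsq (hw v r k)) = 0" using S by simp
    then have "?c = 0" by (simp add: hcoef_def)
    moreover have "hw v r i = 0"
      using S0 i by (subst (asm) sum_nonneg_eq_0_iff) auto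
    ultimately show ?thesis using H by (simp add: hw_def split: if_splits)
  next
    case False
    then have "?c * (1 - ?s) = 1" unfolding hcoef_def S by (simp add: field_simps)
    then show ?thesis using H by (simp add: hw_def)
  qed
  have "hR N v r $$ (i,r) = hH N v r $$ (i,r) * hdg v r r" by (rule hR_index[OF i r])
  also have "\<dots> = v i * (hth v r * qcnj (hth v r))" by (simp add: H2 hdg_def mult.assoc)
  finally show ?thesis by (simp add: hth_cnj)
qed

lemma hR_col_fix:
  assumes i: "i < N" and j: "j < N" and jr: "j \<noteq> r" and w0: "hw v r j = 0"
  shows "hR N v r $$ (i,j) = (if i = j then 1 else 0)"
  using hR_index[OF i j] i j jr w0 by (simp add: hH_index hdg_def)

lemma hR_comm:
  assumes rn: "r < n" and nm: "n \<le> m"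
    and uv: "\<forall>k<n. u k = v k" and u0: "\<forall>k. n \<le> k \<longrightarrow> u k = 0"
    and vb: "\<forall>k<n. v k \<noteq> 0 \<longrightarrow> b k = b r"
  shows "hR m u r * diag_rect m n b = diag_rect m n b * hR n v r"
proof -
  have th: "hth u r = hth v r" using uv rn by (simp add: hth_def)
  have hwn: "hw u r k = hw v r k" if "k < n" for k using uv that th by (simp add: hw_def)
  have hw0: "hw u r k = 0" if "n \<le> k" for k using u0 that rn by (simp add: hw_def)
  have dg: "hdg u r k = hdg v r k" for k by (simp add: hdg_def th)
  have "(\<Sum>k<m. nsq (hw u r k)) = (\<Sum>k<n. nsq (hw u r k)) + (\<Sum>k\<in>{n..<m}. nsq (hw u r k))"
  proof -
    have "{..<m} = {..<n} \<union> {n..<m}" using nm by auto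
    then show ?thesis by (metis finite_lessThan finite_atLeastLessThan sum.union_disjoint ivl_disj_int_one(2))
  qed
  also have "(\<Sum>k\<in>{n..<m}. nsq (hw u r k)) = 0" using hw0 by simp
  also have "(\<Sum>k<n. nsq (hw u r k)) = (\<Sum>k<n. nsq (hw v r k))" using hwn by simp
  finally have cc: "hcoef m u r = hcoef n v r" by (simp add: hcoef_def)
  have sup: "b k = b r" if "k < n" "hw v r k \<noteq> 0" for k
    using that vb by (auto simp: hw_def split: if_splits)
  show ?thesis
  proof (rule eq_matI)
    fix i j assume "i < dim_row (diag_rect m n b * hR n v r)" "j < dim_col (diag_rect m n b * hR n v r)"
    then have i: "i < m" and j: "j < n" by (simp_all add: index_mult_mat)
    have jm: "j < m" using j nm by simp
    have L: "(hR m u r * diag_rect m n b) $$ (i,j) = hR m u r $$ (i,j) * qreal (b j)"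
    proof -
      have "(hR m u r * diag_rect m n b) $$ (i,j) = (\<Sum>t<m. hR m u r $$ (i,t) * diag_rect m n b $$ (t,j))"
        using i j by (rule mult_index[OF hR_carrier diag_rect_carrier])
      also have "\<dots> = (\<Sum>t<m. hR m u r $$ (i,t) * (if t = j then qreal (b j) else 0))"
        using j by (intro sum.cong refl) auto
      also have "\<dots> = hR m u r $$ (i,j) * qreal (b j)" by (rule diag_sum_right[OF jm])
      finally show ?thesis .
    qed
    have R: "(diag_rect m n b * hR n v r) $$ (i,j) = (if i < n then qreal (b i) * hR n v r $$ (i,j) else 0)"
    proof -
      have "(diag_rect m n b * hR n v r) $$ (i,j) = (\<Sum>t<n. diag_rect m n b $$ (i,t) * hR n v r $$ (t,j))"
        using i j by (rule mult_index[OF diag_rect_carrier hR_carrier])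
      also have "\<dots> = (\<Sum>t<n. (if i = t then qreal (b i) else 0) * hR n v r $$ (t,j))"
        using i by (intro sum.cong refl) auto
      also have "\<dots> = (if i < n then qreal (b i) * hR n v r $$ (i,j) else 0)"
      proof (cases "i < n")
        case True then show ?thesis using diag_sum_left[OF True] by simp
      next
        case False then show ?thesis by (intro trans[OF sum.neutral]) auto
      qed
      finally show ?thesis .
    qed
    show "(hR m u r * diag_rect m n b) $$ (i,j) = (diag_rect m n b * hR n v r) $$ (i,j)"
    proof (cases "i < n")
      case False
      then have "i \<noteq> j" using j by auto
      then have "hR m u r $$ (i,j) = 0"
        using hR_index[OF i jm, of u r] hw0[of i] False i jm by (simp add: hH_index)
      then show ?thesis using L R False by simp
    next
      case True
      have "hR m u r $$ (i,j) = hH m u r $$ (i,j) * hdg u r j" by (rule hR_index[OF i jm])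
      also have "\<dots> = hH n v r $$ (i,j) * hdg v r j"
        using True j jm i by (simp add: hH_index hwn cc dg)
      also have "\<dots> = hR n v r $$ (i,j)" by (rule hR_index[OF True j, symmetric])
      finally have same: "hR m u r $$ (i,j) = hR n v r $$ (i,j)" .
      have "hR n v r $$ (i,j) * qreal (b j) = qreal (b i) * hR n v r $$ (i,j)"
      proof (cases "i = j")
        case True then show ?thesis by (simp add: qreal_comm)
      next
        case False
        show ?thesis
        proof (cases "hw v r i = 0 \<or> hw v r j = 0")
          case True
          then have "hR n v r $$ (i,j) = 0"
            using hR_index[OF \<open>i < n\<close> j, of v r] False \<open>i < n\<close> j by (auto simp: hH_index)
          then show ?thesis by simp
        next
          case False
          then have "b i = b r" "b j = b r" using sup \<open>i < n\<close> j by auto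
          then show ?thesis by (simp add: qreal_comm)
        qed
      qed
      then show ?thesis using L R True same by simp
    qed
  qed (simp_all add: index_mult_mat)
qed

definition colagree :: "nat \<Rightarrow> nat \<Rightarrow> quat mat \<Rightarrow> quat mat \<Rightarrow> bool" where
  "colagree m r U1 U2 \<longleftrightarrow> (\<forall>i<m. \<forall>j<r. U1 $$ (i,j) = U2 $$ (i,j))"

lemma agree_entries:
  assumes U1: "qunitary m U1" and U2: "qunitary m U2" and ag: "colagree m r U1 U2"
    and i: "i < m" and j: "j < m" and ij: "i < r \<or> j < r"
  shows "(qadj U1 * U2) $$ (i,j) = (if i = j then 1 else 0)"
proof -
  have c1: "U1 \<in> carrier_mat m m" and c2: "U2 \<in> carrier_mat m m" using U1 U2 by (auto simp: qunitary_def)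
  have "(qadj U1 * U2) $$ (i,j) = (\<Sum>t<m. qadj U1 $$ (i,t) * U2 $$ (t,j))"
    using i j by (rule mult_index[OF qadj_carrier[OF c1] c2])
  also have "\<dots> = (\<Sum>t<m. qcnj (U1 $$ (t,i)) * U2 $$ (t,j))"
    using i c1 by (intro sum.cong refl) auto
  also have "\<dots> = (if i = j then 1 else 0)"
  proof (cases "j < r")
    case True
    then have "(\<Sum>t<m. qcnj (U1 $$ (t,i)) * U2 $$ (t,j)) = (\<Sum>t<m. qcnj (U1 $$ (t,i)) * U1 $$ (t,j))"
      using ag unfolding colagree_def by (intro sum.cong refl) auto
    then show ?thesis using unitary_orth[OF U1 i j] by simp
  next
    case False
    then have "i < r" using ij by simp
    then have "(\<Sum>t<m. qcnj (U1 $$ (t,i)) * U2 $$ (t,j)) = (\<Sum>t<m. qcnj (U2 $$ (t,i)) * U2 $$ (t,j))"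
      using ag unfolding colagree_def by (intro sum.cong refl) auto
    then show ?thesis using unitary_orth[OF U2 i j] by simp
  qed
  finally show ?thesis .
qed

lemma xx_fixed_row:
  assumes W: "\<forall>j<n. W $$ (i,j) = (if i = j then 1 else 0)" and Z: "\<forall>j<n. Z $$ (i,j) = (if i = j then 1 else 0)"
    and i: "i < (n::nat)"
  shows "xx n W Z b i = b i"
proof -
  have "xx n W Z b i = (\<Sum>j<n. if j = i then b j else 0)"
    unfolding xx_def using W Z by (intro sum.cong refl) auto
  also have "\<dots> = b i" by (subst sum.delta) (use i in auto)
  finally show ?thesis .
qed

lemma step_core:
  assumes nm: "n \<le> m" and rn: "r < n"
    and U1: "qunitary m U1" and U2: "qunitary m U2" and V1: "qunitary n V1" and V2: "qunitary n V2"
    and a: "desc_nn n a" and b: "desc_nn n b"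
    and agU: "colagree m r U1 U2" and agV: "colagree n r V1 V2"
    and eq: "qre (qtrace (qadj (U1 * diag_rect m n a * qadj V1) * (U2 * diag_rect m n b * qadj V2)))
             = (\<Sum>i<n. a i * b i)"
    and br: "0 < b r"
    and rk: "r \<le> k" and kn: "k < n" and gap: "0 < a k - (if Suc k < n then a (Suc k) else 0)"
    and bconst: "\<forall>i. r \<le> i \<longrightarrow> i \<le> k \<longrightarrow> b i = b r"
  shows "(\<forall>j<n. (qadj U1 * U2) $$ (r,j) = (qadj V1 * V2) $$ (r,j) \<and>
                ((qadj V1 * V2) $$ (r,j) = 0 \<or> b j = b r)) \<and>
         (\<forall>j. n \<le> j \<longrightarrow> j < m \<longrightarrow> (qadj U1 * U2) $$ (r,j) = 0)"
proof -
  define W where "W = qadj U1 * U2"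
  define Z where "Z = qadj V1 * V2"
  have c1: "U1 \<in> carrier_mat m m" and c2: "U2 \<in> carrier_mat m m" and c3: "V1 \<in> carrier_mat n n"
    and c4: "V2 \<in> carrier_mat n n" using U1 U2 V1 V2 by (auto simp: qunitary_def)
  have Wu: "qunitary m W" unfolding W_def by (rule qunitary_mult[OF qunitary_adj[OF U1] U2])
  have Zu: "qunitary n Z" unfolding Z_def by (rule qunitary_mult[OF qunitary_adj[OF V1] V2])
  have Wd: "W $$ (i,j) = (if i = j then 1 else 0)" if "i < m" "j < m" "i < r \<or> j < r" for i j
    unfolding W_def by (rule agree_entries[OF U1 U2 agU that])
  have Zd: "Z $$ (i,j) = (if i = j then 1 else 0)" if "i < n" "j < n" "i < r \<or> j < r" for i j
    unfolding Z_def by (rule agree_entries[OF V1 V2 agV that])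
  have bnn: "\<forall>i<n. 0 \<le> b i" and ann: "\<forall>i<n. 0 \<le> a i" using a b by (auto simp: desc_nn_def)
  let ?x = "xx n W Z b"
  have tr: "(\<Sum>i<n. a i * ?x i) = (\<Sum>i<n. a i * b i)"
    using eq trace_formula[OF nm c1 c2 c3 c4, of a b] unfolding W_def Z_def xx_def by simp
  have xlow: "?x i = b i" if "i < r" for i
    using that rn nm by (intro xx_fixed_row) (auto simp: Wd Zd)
  have W0: "\<forall>i j. r \<le> i \<longrightarrow> i < n \<longrightarrow> j < r \<longrightarrow> W $$ (i,j) = 0 \<and> Z $$ (i,j) = 0"
  proof (intro allI impI)
    fix i j assume h: "r \<le> i" "i < n" "j < r"
    then have "i \<noteq> j" "i < m" "j < m" "j < n" using nm rn by auto
    then show "W $$ (i,j) = 0 \<and> Z $$ (i,j) = 0" using Wd[of i j] Zd[of i j] h by simp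
  qed
  have split: "(\<Sum>i<n. f i) = (\<Sum>i<r. f i) + (\<Sum>i\<in>{r..<n}. f i)" for f :: "nat \<Rightarrow> real"
  proof -
    have "{..<n} = {..<r} \<union> {r..<n}" using rn by auto
    then show ?thesis by (metis finite_lessThan finite_atLeastLessThan sum.union_disjoint ivl_disj_int_one(2))
  qed
  have "(\<Sum>i<r. a i * ?x i) = (\<Sum>i<r. a i * b i)" using xlow by simp
  then have tail: "(\<Sum>i\<in>{r..<n}. a i * (b i - ?x i)) = 0"
    using tr split[of "\<lambda>i. a i * ?x i"] split[of "\<lambda>i. a i * b i"]
    by (simp add: algebra_simps sum_subtractf)
  have S: "\<forall>k'. r \<le> k' \<longrightarrow> k' < n \<longrightarrow> 0 \<le> (\<Sum>i\<in>{r..k'}. b i - ?x i)"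
  proof (intro allI impI)
    fix k' assume "r \<le> k'" "k' < n"
    then have "(\<Sum>i\<in>{r..k'}. ?x i) \<le> (\<Sum>i\<in>{r..k'}. b i)" by (intro kyfan[OF Wu Zu nm b _ _ W0])
    then show "0 \<le> (\<Sum>i\<in>{r..k'}. b i - ?x i)" by (simp add: sum_subtractf)
  qed
  have "(a k - (if Suc k < n then a (Suc k) else 0)) * (\<Sum>i\<in>{r..k}. b i - ?x i) \<le> 0"
    using abel_bound(1)[OF _ _ S rk kn, of a] a tail by (simp add: desc_nn_def)
  then have Sk: "(\<Sum>i\<in>{r..k}. b i - ?x i) \<le> 0" using gap by (simp add: mult_le_0_iff)
  have xb: "?x i \<le> b r" if "r \<le> i" "i < n" for i
  proof (rule xx_bound[OF Wu Zu nm b that])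
    show "\<forall>j<r. W $$ (i,j) = 0 \<and> Z $$ (i,j) = 0" using W0 that by blast
  qed
  have nn: "\<forall>i\<in>{r..k}. 0 \<le> b r - ?x i"
  proof
    fix i assume "i \<in> {r..k}"
    then have "r \<le> i" "i < n" using kn by auto
    then show "0 \<le> b r - ?x i" using xb[of i] by simp
  qed
  have "(\<Sum>i\<in>{r..k}. b r - ?x i) = (\<Sum>i\<in>{r..k}. b i - ?x i)"
  proof (rule sum.cong[OF refl])
    fix i assume "i \<in> {r..k}"
    then have "r \<le> i" "i \<le> k" by auto
    then have "b i = b r" using bconst by blast
    then show "b r - ?x i = b i - ?x i" by simp
  qed
  then have le0: "(\<Sum>i\<in>{r..k}. b r - ?x i) \<le> 0" using Sk by linarith
  have ge0: "0 \<le> (\<Sum>i\<in>{r..k}. b r - ?x i)" using nn by (intro sum_nonneg) blast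
  have "(\<Sum>i\<in>{r..k}. b r - ?x i) = 0" using le0 ge0 by linarith
  then have "\<forall>i\<in>{r..k}. b r - ?x i = 0"
    using sum_nonneg_eq_0_iff[OF finite_atLeastAtMost[of r k], of "\<lambda>i. b r - ?x i"] nn by blast
  moreover have "r \<in> {r..k}" using rk by simp
  ultimately have xr: "?x r = b r" by fastforce
  have W0r: "\<forall>j<r. W $$ (r,j) = 0 \<and> Z $$ (r,j) = 0" using W0 rn by auto
  show ?thesis using row_analysis[OF Wu Zu nm b rn br W0r xr] unfolding W_def Z_def by blast
qed

lemma col_update:
  assumes U1: "qunitary N U1" and U2: "qunitary N U2" and ag: "colagree N r U1 U2"
    and Pc: "P \<in> carrier_mat N N"
    and Pr: "\<forall>t<N. P $$ (t,r) = qcnj ((qadj U1 * U2) $$ (r,t))"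
    and Pj: "\<forall>j<r. \<forall>t<N. P $$ (t,j) = (if t = j then 1 else 0)"
    and rN: "r < N"
  shows "colagree N (Suc r) U1 (U2 * P)"
  unfolding colagree_def
proof (intro allI impI)
  fix i j assume i: "i < N" and j: "j < Suc r"
  have c1: "U1 \<in> carrier_mat N N" and c2: "U2 \<in> carrier_mat N N" using U1 U2 by (auto simp: qunitary_def)
  have jN: "j < N" using j rN by simp
  have e: "(U2 * P) $$ (i,j) = (\<Sum>t<N. U2 $$ (i,t) * P $$ (t,j))"
    using i jN by (rule mult_index[OF c2 Pc])
  show "U1 $$ (i,j) = (U2 * P) $$ (i,j)"
  proof (cases "j < r")
    case True
    have "(\<Sum>t<N. U2 $$ (i,t) * P $$ (t,j)) = (\<Sum>t<N. U2 $$ (i,t) * (if t = j then 1 else 0))"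
      using Pj True by (intro sum.cong refl) auto
    also have "\<dots> = U2 $$ (i,j)" by (rule delta_sum_right[OF jN])
    finally show ?thesis using e ag True i unfolding colagree_def by simp
  next
    case False
    then have jr: "j = r" using j by simp
    have aW: "qadj (qadj U1 * U2) = qadj U2 * U1"
      using qadj_mult[OF qadj_carrier[OF c1] c2] by simp
    have "(\<Sum>t<N. U2 $$ (i,t) * P $$ (t,j)) = (\<Sum>t<N. U2 $$ (i,t) * qadj (qadj U1 * U2) $$ (t,r))"
      using Pr jr c1 c2 rN by (intro sum.cong refl) (simp add: index_mult_mat carrier_matD)
    also have "\<dots> = (U2 * qadj (qadj U1 * U2)) $$ (i,r)"
      using i rN by (rule mult_index[OF c2 qadj_carrier[OF mult_carrier_mat[OF qadj_carrier[OF c1] c2]], symmetric])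
    also have "U2 * qadj (qadj U1 * U2) = U1"
    proof -
      have "U2 * (qadj U2 * U1) = (U2 * qadj U2) * U1"
        by (rule assoc_mult_mat[OF c2 qadj_carrier[OF c2] c1, symmetric])
      also have "\<dots> = U1" using U2 c1 by (simp add: qunitary_def)
      finally show ?thesis unfolding aW .
    qed
    finally show ?thesis using e jr by simp
  qed
qed

lemma step:
  assumes nm: "n \<le> m" and rn: "r < n"
    and U1: "qunitary m U1" and U2: "qunitary m U2" and V1: "qunitary n V1" and V2: "qunitary n V2"
    and a: "desc_nn n a" and b: "desc_nn n b"
    and agU: "colagree m r U1 U2" and agV: "colagree n r V1 V2"
    and eq: "qre (qtrace (qadj (U1 * diag_rect m n a * qadj V1) * (U2 * diag_rect m n b * qadj V2)))
             = (\<Sum>i<n. a i * b i)"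
    and br: "0 < b r"
    and rk: "r \<le> k" and kn: "k < n" and gap: "0 < a k - (if Suc k < n then a (Suc k) else 0)"
    and bconst: "\<forall>i. r \<le> i \<longrightarrow> i \<le> k \<longrightarrow> b i = b r"
  shows "\<exists>U2' V2'. qunitary m U2' \<and> qunitary n V2' \<and>
           U2' * diag_rect m n b * qadj V2' = U2 * diag_rect m n b * qadj V2 \<and>
           colagree m (Suc r) U1 U2' \<and> colagree n (Suc r) V1 V2'"
proof -
  define W where "W = qadj U1 * U2"
  define Z where "Z = qadj V1 * V2"
  let ?DB = "diag_rect m n b"
  have c1: "U1 \<in> carrier_mat m m" and c2: "U2 \<in> carrier_mat m m" and c3: "V1 \<in> carrier_mat n n"
    and c4: "V2 \<in> carrier_mat n n" using U1 U2 V1 V2 by (auto simp: qunitary_def)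
  have Zu: "qunitary n Z" unfolding Z_def by (rule qunitary_mult[OF qunitary_adj[OF V1] V2])
  have core: "(\<forall>j<n. W $$ (r,j) = Z $$ (r,j) \<and> (Z $$ (r,j) = 0 \<or> b j = b r)) \<and>
         (\<forall>j. n \<le> j \<longrightarrow> j < m \<longrightarrow> W $$ (r,j) = 0)"
    unfolding W_def Z_def by (rule step_core[OF assms])
  have Zd: "Z $$ (r,j) = 0" if "j < r" for j
    using agree_entries[OF V1 V2 agV rn, of j] that rn unfolding Z_def by simp
  define v where "v k = (if k < n then qcnj (Z $$ (r,k)) else 0)" for k
  have vn: "(\<Sum>k<n. nsq (v k)) = 1"
    using unitary_row_norm[OF Zu rn] unfolding v_def by simp
  have vm: "(\<Sum>k<m. nsq (v k)) = 1"
  proof -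
    have "{..<m} = {..<n} \<union> {n..<m}" using nm by auto
    then have "(\<Sum>k<m. nsq (v k)) = (\<Sum>k<n. nsq (v k)) + (\<Sum>k\<in>{n..<m}. nsq (v k))"
      by (metis finite_lessThan finite_atLeastLessThan sum.union_disjoint ivl_disj_int_one(2))
    also have "(\<Sum>k\<in>{n..<m}. nsq (v k)) = 0" by (simp add: v_def)
    finally show ?thesis using vn by simp
  qed
  have vb: "\<forall>k<n. v k \<noteq> 0 \<longrightarrow> b k = b r" using core unfolding v_def by auto
  define P where "P = hR m v r"
  define R where "R = hR n v r"
  have rm: "r < m" using rn nm by simp
  have Pc: "P \<in> carrier_mat m m" and Rc: "R \<in> carrier_mat n n" unfolding P_def R_def by simp_all
  have Pu: "qunitary m P" and Ru: "qunitary n R" unfolding P_def R_def by (simp_all add: qunitary_hR)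
  have comm: "P * ?DB = ?DB * R"
    unfolding P_def R_def by (rule hR_comm[OF rn nm _ _ vb]) (auto simp: v_def)
  have hw0: "hw v r j = 0" if "j < r" for j using that Zd by (simp add: hw_def v_def)
  have aR: "qadj R \<in> carrier_mat n n" and aV2: "qadj V2 \<in> carrier_mat n n" using Rc c4 by auto
  have U2D: "U2 * ?DB \<in> carrier_mat m n" by (rule mult_carrier_mat[OF c2 diag_rect_carrier])
  have Bsame: "(U2 * P) * ?DB * qadj (V2 * R) = U2 * ?DB * qadj V2"
  proof -
    have "qadj (V2 * R) = qadj R * qadj V2" by (rule qadj_mult[OF c4 Rc])
    moreover have "(U2 * P) * ?DB = (U2 * ?DB) * R"
    proof -
      have "(U2 * P) * ?DB = U2 * (P * ?DB)" by (rule assoc_mult_mat[OF c2 Pc diag_rect_carrier])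
      also have "\<dots> = U2 * (?DB * R)" by (simp only: comm)
      also have "\<dots> = (U2 * ?DB) * R" by (rule assoc_mult_mat[OF c2 diag_rect_carrier Rc, symmetric])
      finally show ?thesis .
    qed
    moreover have "((U2 * ?DB) * R) * (qadj R * qadj V2) = (U2 * ?DB) * qadj V2"
    proof -
      have "((U2 * ?DB) * R) * (qadj R * qadj V2) = (U2 * ?DB) * (R * (qadj R * qadj V2))"
        by (rule assoc_mult_mat[OF U2D Rc mult_carrier_mat[OF aR aV2]])
      also have "R * (qadj R * qadj V2) = (R * qadj R) * qadj V2"
        by (rule assoc_mult_mat[OF Rc aR aV2, symmetric])
      also have "\<dots> = qadj V2" using Ru left_mult_one_mat[OF aV2] by (simp add: qunitary_def)
      finally show ?thesis .
    qed
    ultimately show ?thesis by simp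
  qed
  have agU': "colagree m (Suc r) U1 (U2 * P)"
  proof (rule col_update[OF U1 U2 agU Pc _ _ rm])
    show "\<forall>t<m. P $$ (t,r) = qcnj ((qadj U1 * U2) $$ (r,t))"
    proof (intro allI impI)
      fix t assume t: "t < m"
      have "P $$ (t,r) = v t" unfolding P_def by (rule hR_col_r[OF rm vm t])
      also have "v t = qcnj (W $$ (r,t))"
        using core t by (cases "t < n") (auto simp: v_def)
      finally show "P $$ (t,r) = qcnj ((qadj U1 * U2) $$ (r,t))" unfolding W_def .
    qed
    show "\<forall>j<r. \<forall>t<m. P $$ (t,j) = (if t = j then 1 else 0)"
      using hR_col_fix[of _ m _ r v] hw0 rn nm unfolding P_def by auto
  qed
  have agV': "colagree n (Suc r) V1 (V2 * R)"
  proof (rule col_update[OF V1 V2 agV Rc _ _ rn])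
    show "\<forall>t<n. R $$ (t,r) = qcnj ((qadj V1 * V2) $$ (r,t))"
    proof (intro allI impI)
      fix t assume t: "t < n"
      have "R $$ (t,r) = v t" unfolding R_def by (rule hR_col_r[OF rn vn t])
      also have "v t = qcnj (Z $$ (r,t))" using t by (simp add: v_def)
      finally show "R $$ (t,r) = qcnj ((qadj V1 * V2) $$ (r,t))" unfolding Z_def .
    qed
    show "\<forall>j<r. \<forall>t<n. R $$ (t,j) = (if t = j then 1 else 0)"
      using hR_col_fix[of _ n _ r v] hw0 rn unfolding R_def by auto
  qed
  show ?thesis
    by (rule exI[of _ "U2 * P"], rule exI[of _ "V2 * R"])
       (use qunitary_mult[OF U2 Pu] qunitary_mult[OF V2 Ru] Bsame agU' agV' in simp)
qed

lemma colagree_sym: "colagree m r U1 U2 \<Longrightarrow> colagree m r U2 U1"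
  unfolding colagree_def by auto

lemma colagree_all: "colagree m 0 U1 U2"
  unfolding colagree_def by auto

lemma svd_eq_cols:
  assumes nm: "n \<le> m" and c1: "U1 \<in> carrier_mat m m" and c2: "U2 \<in> carrier_mat m m"
    and c3: "V1 \<in> carrier_mat n n" and c4: "V2 \<in> carrier_mat n n"
    and agU: "colagree m r U1 U2" and agV: "colagree n r V1 V2"
    and a0: "\<forall>i. r \<le> i \<longrightarrow> i < n \<longrightarrow> a i = 0"
  shows "U1 * diag_rect m n a * qadj V1 = U2 * diag_rect m n a * qadj V2"
proof (rule eq_matI)
  fix i j assume "i < dim_row (U2 * diag_rect m n a * qadj V2)" "j < dim_col (U2 * diag_rect m n a * qadj V2)"
  then have i: "i < m" and j: "j < n" using c2 c4 by (simp_all add: index_mult_mat carrier_matD)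
  show "(U1 * diag_rect m n a * qadj V1) $$ (i,j) = (U2 * diag_rect m n a * qadj V2) $$ (i,j)"
    unfolding svd_entry[OF c1 c3 nm i j] svd_entry[OF c2 c4 nm i j]
  proof (rule sum.cong[OF refl])
    fix k assume k: "k \<in> {..<n}"
    show "U1 $$ (i,k) * qreal (a k) * qcnj (V1 $$ (j,k)) = U2 $$ (i,k) * qreal (a k) * qcnj (V2 $$ (j,k))"
    proof (cases "k < r")
      case True then show ?thesis using agU agV i j unfolding colagree_def by simp
    next
      case False then show ?thesis using a0 k by simp
    qed
  qed
qed (use c1 c2 c3 c4 in \<open>simp_all add: index_mult_mat carrier_matD\<close>)

lemma qtrace_qadj_re:
  assumes "M \<in> carrier_mat k k"
  shows "qre (qtrace (qadj M)) = qre (qtrace M)"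
  using assms unfolding qtrace_def by (simp add: qre_sum carrier_matD)

lemma eq_sym:
  assumes X: "X \<in> carrier_mat m n" and Y: "Y \<in> carrier_mat m n"
  shows "qre (qtrace (qadj X * Y)) = qre (qtrace (qadj Y * X))"
proof -
  have "qadj (qadj X * Y) = qadj Y * X" using qadj_mult[OF qadj_carrier[OF X] Y] by simp
  moreover have "qadj X * Y \<in> carrier_mat n n" by (rule mult_carrier_mat[OF qadj_carrier[OF X] Y])
  ultimately show ?thesis using qtrace_qadj_re by metis
qed

lemma block_end:
  assumes a: "desc_nn n a" and rn: "r < n" and ar: "0 < a r"
  shows "\<exists>k. r \<le> k \<and> k < n \<and> (\<forall>i. r \<le> i \<longrightarrow> i \<le> k \<longrightarrow> a i = a r) \<and>
             0 < a k - (if Suc k < n then a (Suc k) else 0) \<and> (\<forall>i. k < i \<longrightarrow> i < n \<longrightarrow> a i < a r)"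
proof -
  define S where "S = {k. r \<le> k \<and> k < n \<and> a k = a r}"
  have fin: "finite S" unfolding S_def by (rule finite_subset[of _ "{..<n}"]) auto
  have rS: "r \<in> S" unfolding S_def using rn by simp
  define k where "k = Max S"
  have kS: "k \<in> S" unfolding k_def using fin rS by (intro Max_in) auto
  have kmax: "i \<le> k" if "i \<in> S" for i unfolding k_def using fin that by simp
  have rk: "r \<le> k" and kn: "k < n" and ak: "a k = a r" using kS unfolding S_def by auto
  have dsc: "a j \<le> a i" if "i \<le> j" "j < n" for i j using a that by (simp add: desc_nn_def)
  have after: "\<forall>i. k < i \<longrightarrow> i < n \<longrightarrow> a i < a r"
  proof (intro allI impI)
    fix i assume "k < i" "i < n"
    then have "i \<notin> S" using kmax by force
    then have "a i \<noteq> a r" using \<open>k < i\<close> \<open>i < n\<close> rk unfolding S_def by auto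
    moreover have "a i \<le> a r" using dsc[of r i] \<open>k < i\<close> \<open>i < n\<close> rk by simp
    ultimately show "a i < a r" by simp
  qed
  have const: "\<forall>i. r \<le> i \<longrightarrow> i \<le> k \<longrightarrow> a i = a r"
  proof (intro allI impI)
    fix i assume "r \<le> i" "i \<le> k"
    then have "a i \<le> a r" "a k \<le> a i" using dsc kn by auto
    then show "a i = a r" using ak by simp
  qed
  have gap: "0 < a k - (if Suc k < n then a (Suc k) else 0)"
  proof (cases "Suc k < n")
    case True then show ?thesis using after ak by simp
  next
    case False then show ?thesis using ak ar by simp
  qed
  show ?thesis using rk kn const gap after by blast
qed

lemma zero_tail:
  assumes a: "desc_nn n a" and ar: "a r = 0"
  shows "\<forall>i. r \<le> i \<longrightarrow> i < n \<longrightarrow> a i = 0"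
proof (intro allI impI)
  fix i assume "r \<le> i" "i < n"
  then have "a i \<le> a r" "0 \<le> a i" using a unfolding desc_nn_def by auto
  then show "a i = 0" using ar by simp
qed

lemma main_induct:
  assumes nm: "n \<le> m"
  shows "n - r = d \<Longrightarrow> r \<le> n \<Longrightarrow> qunitary m U1 \<Longrightarrow> qunitary m U2 \<Longrightarrow> qunitary n V1 \<Longrightarrow> qunitary n V2 \<Longrightarrow>
    desc_nn n a \<Longrightarrow> desc_nn n b \<Longrightarrow> colagree m r U1 U2 \<Longrightarrow> colagree n r V1 V2 \<Longrightarrow>
    qre (qtrace (qadj (U1 * diag_rect m n a * qadj V1) * (U2 * diag_rect m n b * qadj V2))) = (\<Sum>i<n. a i * b i) \<Longrightarrow>
    \<exists>U V. qunitary m U \<and> qunitary n V \<and> U1 * diag_rect m n a * qadj V1 = U * diag_rect m n a * qadj V \<and>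
          U2 * diag_rect m n b * qadj V2 = U * diag_rect m n b * qadj V"
proof (induction d arbitrary: r a b U1 V1 U2 V2)
  case 0
  then have rn: "r = n" by simp
  have c: "U1 \<in> carrier_mat m m" "U2 \<in> carrier_mat m m" "V1 \<in> carrier_mat n n" "V2 \<in> carrier_mat n n"
    using "0.prems" by (auto simp: qunitary_def)
  have "U1 * diag_rect m n a * qadj V1 = U2 * diag_rect m n a * qadj V2"
    using "0.prems" rn by (intro svd_eq_cols[OF nm c]) auto
  then show ?case using "0.prems"(4) "0.prems"(6) by blast
next
  case (Suc d)
  note P = Suc.prems
  have rn: "r < n" using P(1) by simp
  have U1: "qunitary m U1" and U2: "qunitary m U2" and V1: "qunitary n V1" and V2: "qunitary n V2"
    using P(3) P(4) P(5) P(6) .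
  have a: "desc_nn n a" and b: "desc_nn n b" using P(7) P(8) .
  have agU: "colagree m r U1 U2" and agV: "colagree n r V1 V2" using P(9) P(10) .
  have eq: "qre (qtrace (qadj (U1 * diag_rect m n a * qadj V1) * (U2 * diag_rect m n b * qadj V2))) = (\<Sum>i<n. a i * b i)"
    using P(11) .
  have c: "U1 \<in> carrier_mat m m" "U2 \<in> carrier_mat m m" "V1 \<in> carrier_mat n n" "V2 \<in> carrier_mat n n"
    using U1 U2 V1 V2 by (auto simp: qunitary_def)
  have dSuc: "n - Suc r = d" using P(1) by simp
  have Suc_le: "Suc r \<le> n" using rn by simp
  show ?case
  proof (cases "a r = 0")
    case True
    have "U1 * diag_rect m n a * qadj V1 = U2 * diag_rect m n a * qadj V2"
      by (rule svd_eq_cols[OF nm c agU agV zero_tail[OF a True]])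
    then show ?thesis using U2 V2 by blast
  next
    case anz: False
    show ?thesis
    proof (cases "b r = 0")
      case True
      have "U2 * diag_rect m n b * qadj V2 = U1 * diag_rect m n b * qadj V1"
        by (rule svd_eq_cols[OF nm c(2,1,4,3) colagree_sym[OF agU] colagree_sym[OF agV] zero_tail[OF b True]])
      then show ?thesis using U1 V1 by blast
    next
      case bnz: False
      have "0 \<le> a r" "0 \<le> b r" using a b rn unfolding desc_nn_def by blast+
      then have ar: "0 < a r" and br: "0 < b r" using anz bnz by linarith+
      obtain ka where rka: "r \<le> ka" and kan: "ka < n" and aconst: "\<forall>i. r \<le> i \<longrightarrow> i \<le> ka \<longrightarrow> a i = a r"
        and gapa: "0 < a ka - (if Suc ka < n then a (Suc ka) else 0)"
        using block_end[OF a rn ar] by blast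
      show ?thesis
      proof (cases "\<forall>i. r \<le> i \<longrightarrow> i \<le> ka \<longrightarrow> b i = b r")
        case True
        obtain U2' V2' where U2': "qunitary m U2'" and V2': "qunitary n V2'"
          and same: "U2' * diag_rect m n b * qadj V2' = U2 * diag_rect m n b * qadj V2"
          and ag1: "colagree m (Suc r) U1 U2'" and ag2: "colagree n (Suc r) V1 V2'"
          using step[OF nm rn U1 U2 V1 V2 a b agU agV eq br rka kan gapa True] by blast
        have "\<exists>U V. qunitary m U \<and> qunitary n V \<and> U1 * diag_rect m n a * qadj V1 = U * diag_rect m n a * qadj V \<and>
          U2' * diag_rect m n b * qadj V2' = U * diag_rect m n b * qadj V"
          using Suc.IH[OF dSuc Suc_le U1 U2' V1 V2' a b ag1 ag2] eq same by simp
        then show ?thesis using same by simp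
      next
        case False
        then obtain i where ri: "r \<le> i" and ika: "i \<le> ka" and bi: "b i \<noteq> b r" by blast
        obtain kb where rkb: "r \<le> kb" and kbn: "kb < n" and bconst: "\<forall>i. r \<le> i \<longrightarrow> i \<le> kb \<longrightarrow> b i = b r"
          and gapb: "0 < b kb - (if Suc kb < n then b (Suc kb) else 0)"
          using block_end[OF b rn br] by blast
        have "kb < i"
        proof (rule ccontr)
          assume "\<not> kb < i"
          then have "i \<le> kb" by simp
          then show False using bconst ri bi by blast
        qed
        have aconst': "\<forall>j. r \<le> j \<longrightarrow> j \<le> kb \<longrightarrow> a j = a r"
        proof (intro allI impI)
          fix j assume "r \<le> j" "j \<le> kb"
          then have "j \<le> ka" using \<open>kb < i\<close> ika by simp
          then show "a j = a r" using aconst \<open>r \<le> j\<close> by blast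
        qed
        have Ac: "U1 * diag_rect m n a * qadj V1 \<in> carrier_mat m n"
          by (rule mult_carrier_mat[OF mult_carrier_mat[OF c(1) diag_rect_carrier] qadj_carrier[OF c(3)]])
        have Bc: "U2 * diag_rect m n b * qadj V2 \<in> carrier_mat m n"
          by (rule mult_carrier_mat[OF mult_carrier_mat[OF c(2) diag_rect_carrier] qadj_carrier[OF c(4)]])
        have eq': "qre (qtrace (qadj (U2 * diag_rect m n b * qadj V2) * (U1 * diag_rect m n a * qadj V1))) = (\<Sum>i<n. b i * a i)"
          using eq eq_sym[OF Ac Bc] by (simp add: mult.commute)
        obtain U1' V1' where U1': "qunitary m U1'" and V1': "qunitary n V1'"
          and same: "U1' * diag_rect m n a * qadj V1' = U1 * diag_rect m n a * qadj V1"
          and ag1: "colagree m (Suc r) U2 U1'" and ag2: "colagree n (Suc r) V2 V1'"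
          using step[OF nm rn U2 U1 V2 V1 b a colagree_sym[OF agU] colagree_sym[OF agV] eq' ar rkb kbn gapb aconst'] by blast
        have "\<exists>U V. qunitary m U \<and> qunitary n V \<and> U1' * diag_rect m n a * qadj V1' = U * diag_rect m n a * qadj V \<and>
          U2 * diag_rect m n b * qadj V2 = U * diag_rect m n b * qadj V"
          using Suc.IH[OF dSuc Suc_le U1' U2 V1' V2 a b colagree_sym[OF ag1] colagree_sym[OF ag2]] eq same by simp
        then show ?thesis using same by simp
      qed
    qed
  qed
qed

lemma re_trace_xx:
  assumes nm: "n \<le> m" and U1: "qunitary m U1" and U2: "qunitary m U2" and V1: "qunitary n V1" and V2: "qunitary n V2"
  shows "qre (qtrace (qadj (U1 * diag_rect m n a * qadj V1) * (U2 * diag_rect m n b * qadj V2))) =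
    (\<Sum>i<n. a i * xx n (qadj U1 * U2) (qadj V1 * V2) b i)"
  using trace_formula[OF nm, of U1 U2 V1 V2 a b] U1 U2 V1 V2 unfolding xx_def by (simp add: qunitary_def)

lemma ineq_part:
  assumes nm: "n \<le> m" and U1: "qunitary m U1" and U2: "qunitary m U2" and V1: "qunitary n V1" and V2: "qunitary n V2"
    and a: "desc_nn n a" and b: "desc_nn n b"
  shows "qre (qtrace (qadj (U1 * diag_rect m n a * qadj V1) * (U2 * diag_rect m n b * qadj V2))) \<le> (\<Sum>i<n. a i * b i)"
proof (cases "n = 0")
  case True then show ?thesis using re_trace_xx[OF nm U1 U2 V1 V2, of a b] by simp
next
  case False
  define W where "W = qadj U1 * U2"
  define Z where "Z = qadj V1 * V2"
  have Wu: "qunitary m W" unfolding W_def by (rule qunitary_mult[OF qunitary_adj[OF U1] U2])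
  have Zu: "qunitary n Z" unfolding Z_def by (rule qunitary_mult[OF qunitary_adj[OF V1] V2])
  let ?x = "xx n W Z b"
  have S: "\<forall>k. 0 \<le> k \<longrightarrow> k < n \<longrightarrow> 0 \<le> (\<Sum>i\<in>{0..k}. b i - ?x i)"
  proof (intro allI impI)
    fix k :: nat assume "0 \<le> k" "k < n"
    then have "(\<Sum>i\<in>{0..k}. ?x i) \<le> (\<Sum>i\<in>{0..k}. b i)" by (intro kyfan[OF Wu Zu nm b]) auto
    then show "0 \<le> (\<Sum>i\<in>{0..k}. b i - ?x i)" by (simp add: sum_subtractf)
  qed
  have "0 \<le> (\<Sum>i\<in>{0..<n}. a i * (b i - ?x i))"
    using abel_bound(2)[where a=a and y="\<lambda>i. b i - ?x i" and r=0 and k=0 and n=n, OF _ _ S] a False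
    by (simp add: desc_nn_def)
  then have "(\<Sum>i<n. a i * ?x i) \<le> (\<Sum>i<n. a i * b i)"
    by (simp add: atLeast0LessThan algebra_simps sum_subtractf)
  then show ?thesis using re_trace_xx[OF nm U1 U2 V1 V2, of a b] unfolding W_def Z_def by simp
qed

lemma eq_back:
  assumes nm: "n \<le> m" and U: "qunitary m U" and V: "qunitary n V"
  shows "qre (qtrace (qadj (U * diag_rect m n a * qadj V) * (U * diag_rect m n b * qadj V))) = (\<Sum>i<n. a i * b i)"
proof -
  have "qadj U * U = 1\<^sub>m m" "qadj V * V = 1\<^sub>m n" using U V by (simp_all add: qunitary_def)
  moreover have "xx n (1\<^sub>m m) (1\<^sub>m n) b i = b i" if "i < n" for i
    using that nm by (intro xx_fixed_row) auto
  ultimately show ?thesis using re_trace_xx[OF nm U U V V, of a b] by simp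
qed

theorem lemma3p4:
  fixes A B :: "quat mat" and m n :: nat and sA sB :: "nat \<Rightarrow> real"
  assumes "m \<ge> n"
    and "A \<in> carrier_mat m n" and "B \<in> carrier_mat m n"
    and "singular_values m n A sA" and "singular_values m n B sB"
  shows "qre (qtrace (qadj A * B)) \<le> (\<Sum>i<n. sA i * sB i) \<and>
         (qre (qtrace (qadj A * B)) = (\<Sum>i<n. sA i * sB i) \<longleftrightarrow>
           (\<exists>U V. qunitary m U \<and> qunitary n V \<and>
                  A = U * diag_rect m n sA * qadj V \<and> B = U * diag_rect m n sB * qadj V))"
proof -
  have nm: "n \<le> m" using assms(1) .
  obtain U1 V1 where U1: "qunitary m U1" and V1: "qunitary n V1" and A: "A = U1 * diag_rect m n sA * qadj V1"
    using assms(4) unfolding singular_values_def by blast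
  obtain U2 V2 where U2: "qunitary m U2" and V2: "qunitary n V2" and B: "B = U2 * diag_rect m n sB * qadj V2"
    using assms(5) unfolding singular_values_def by blast
  have a: "desc_nn n sA" using assms(4) unfolding singular_values_def desc_nn_def by blast
  have b: "desc_nn n sB" using assms(5) unfolding singular_values_def desc_nn_def by blast
  have ineq: "qre (qtrace (qadj A * B)) \<le> (\<Sum>i<n. sA i * sB i)"
    unfolding A B by (rule ineq_part[OF nm U1 U2 V1 V2 a b])
  have fwd: "\<exists>U V. qunitary m U \<and> qunitary n V \<and> A = U * diag_rect m n sA * qadj V \<and> B = U * diag_rect m n sB * qadj V"
    if eq: "qre (qtrace (qadj A * B)) = (\<Sum>i<n. sA i * sB i)"
    using main_induct[OF nm _ _ U1 U2 V1 V2 a b colagree_all colagree_all, of n] eq unfolding A B by simp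
  have bwd: "qre (qtrace (qadj A * B)) = (\<Sum>i<n. sA i * sB i)"
    if ex: "\<exists>U V. qunitary m U \<and> qunitary n V \<and> A = U * diag_rect m n sA * qadj V \<and> B = U * diag_rect m n sB * qadj V"
  proof -
    obtain U V where U: "qunitary m U" and V: "qunitary n V" and "A = U * diag_rect m n sA * qadj V"
      and "B = U * diag_rect m n sB * qadj V" using ex by blast
    then show ?thesis using eq_back[OF nm U V] by simp
  qed
  show ?thesis using ineq fwd bwd by blast
qed


end
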